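(* Let $\overline{\mathcal{O}}$, $\varphi$ be as in the context, let $K$ be a complete non-Archimedean field, and let $F:\overline{\mathcal{O}}\to K$ be a continuous non-vanishing function. Suppose that for all $n\in\mathbb{N}$ and all $\mathbf{x}=(\mathbf{x}_t)_t\in\overline{\mathcal{O}}$ with $|\mathbf{x}_t|<1$ for all $t$, $$\varphi^{(n)}(-\mathbf{x})=-\mathbf{x}\ \Longrightarrow\ \prod_{j=0}^{n-1}F\left(-\varphi^{(j)}(-\mathbf{x})\right)=1.$$ Then there exists a continuous non-vanishing function $G:\overline{\mathcal{O}}\to K$ such that $F(\mathbf{x})=\dfrac{G(\mathbf{x})}{G(-\varphi(-\mathbf{x}))}$ for all $\mathbf{x}\in\overline{\mathcal{O}}$.
   Context: Let $q$ be a prime power, $A=\mathbb{F}_q[\theta]$, $k=\mathbb{F}_q(\theta)$. Let $\mathcal{O}=\prod_t\mathcal{O}_t$ be a finite product with each $\mathcal{O}_t\in\{\mathbb{Z},A\}$; for each $t$ fix a prime number $p_t$ (if $\mathcal{O}_t=\mathbb{Z}$, with $\overline{\mathcal{O}}_t=\mathbb{Z}_{p_t}$) or a monic irreducible $v_t\in A$ (if $\mathcal{O}_t=A$, with $\overline{\mathcal{O}}_t=A_{v_t}$ the $v_t$-adic completion), and $\overline{\mathcal{O}}=\prod_t\overline{\mathcal{O}}_t$. Fix $\pi_t$ a positive power of $p_t$ resp. $v_t$. Each $\mathbf{x}_t\in\overline{\mathcal{O}}_t$ is uniquely $\sum_{i\ge0}x_{t,i}\pi_t^i$ with integer digits $0\le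 x_{t,i}<\pi_t$ (case $\mathbb{Z}$) or polynomial digits of degree $<\deg\pi_t$ (case $A$); $\varphi_t(\mathbf{x}_t)=\sum_{i\ge0}x_{t,i+1}\pi_t^i$ and $\varphi(\mathbf{x})=(\varphi_t(\mathbf{x}_t))_t$; $\varphi^{(j)}$ is the $j$-fold iterate. If $\varphi^{(n)}(\mathbf{y})=\mathbf{y}$ then each component $\mathbf{y}_t$ is an element of $\mathbb{Q}$ resp. $k$ (a ratio of an element of $\mathcal{O}_t$ and $1-\pi_t^n$); here $|\cdot|$ denotes the usual real absolute value on $\mathbb{Q}$ and the $\infty$-adic absolute value $|f/g|=q^{\deg f-\deg g}$ on $k$. *)

theory Defs
  imports "HOL-Computational_Algebra.Computational_Algebra"
begin

definition nonarch_abs :: "('k::field \<Rightarrow> real) \<Rightarrow> bool" where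
  "nonarch_abs abv \<longleftrightarrow>
     (\<forall>x. 0 \<le> abv x) \<and> (\<forall>x. abv x = 0 \<longleftrightarrow> x = 0) \<and>
     (\<forall>x y. abv (x * y) = abv x * abv y) \<and>
     (\<forall>x y. abv (x + y) \<le> max (abv x) (abv y))"

definition abv_complete :: "('k::field \<Rightarrow> real) \<Rightarrow> bool" where
  "abv_complete abv \<longleftrightarrow>
     (\<forall>s::nat \<Rightarrow> 'k.
        (\<forall>\<epsilon>>0. \<exists>N. \<forall>m\<ge>N. \<forall>n\<ge>N. abv (s m - s n) < \<epsilon>) \<longrightarrow>
        (\<exists>L. \<forall>\<epsilon>>0. \<exists>N. \<forall>n\<ge>N. abv (s n - L) < \<epsilon>))"

definition complete_nonarch_field :: "('k::field \<Rightarrow> real) \<Rightarrow> bool" where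
  "complete_nonarch_field abv \<longleftrightarrow> nonarch_abs abv \<and> abv_complete abv"

text \<open>An element of the pi-adic completion of R (R = int or F_q[theta]) is
  represented by the sequence of its truncations x n = sum of the first n digits,
  i.e. the canonical residue of x modulo pi^n (0 <= x n < pi^n for int,
  degree x n < n * degree pi for polynomials).\<close>

definition adic_elems :: "'a::euclidean_ring \<Rightarrow> (nat \<Rightarrow> 'a) set" where
  "adic_elems \<pi> = {x. \<forall>n. x n mod \<pi> ^ n = x n \<and> x (Suc n) mod \<pi> ^ n = x n}"

definition adic_neg :: "'a::euclidean_ring \<Rightarrow> (nat \<Rightarrow> 'a) \<Rightarrow> (nat \<Rightarrow> 'a)" where
  "adic_neg \<pi> x = (\<lambda>n. (- x n) mod \<pi> ^ n)"

text \<open>The digit shift: sum x_i pi^i maps to sum x_(i+1) pi^i.\<close>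
definition adic_shift :: "'a::euclidean_ring \<Rightarrow> (nat \<Rightarrow> 'a) \<Rightarrow> (nat \<Rightarrow> 'a)" where
  "adic_shift \<pi> x = (\<lambda>n. x (Suc n) div \<pi>)"

text \<open>Real absolute value on Q (for a/b) and infinity-adic absolute value on k (for a/b).\<close>
definition rat_abs :: "int \<Rightarrow> int \<Rightarrow> real" where
  "rat_abs a b = \<bar>real_of_int a / real_of_int b\<bar>"

definition kinf_abs :: "'f::{finite,field} poly \<Rightarrow> 'f poly \<Rightarrow> real" where
  "kinf_abs a b = (if a = 0 then 0
      else real (card (UNIV :: 'f set)) powr (real (degree a) - real (degree b)))"

text \<open>x in Z_pi is the rational a/b (b nonzero) with |a/b| < 1.\<close>
definition small_Z :: "int \<Rightarrow> (nat \<Rightarrow> int) \<Rightarrow> bool" where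
  "small_Z \<pi> x \<longleftrightarrow> (\<exists>a b. b \<noteq> 0 \<and> (\<forall>n. \<pi> ^ n dvd (b * x n - a)) \<and> rat_abs a b < 1)"

text \<open>x in A_v is the element a/b of k (b nonzero) with |a/b|_infinity < 1.\<close>
definition small_A :: "'f::{finite,field} poly \<Rightarrow> (nat \<Rightarrow> 'f poly) \<Rightarrow> bool" where
  "small_A \<pi> x \<longleftrightarrow> (\<exists>a b. b \<noteq> 0 \<and> (\<forall>n. \<pi> ^ n dvd (b * x n - a)) \<and> kinf_abs a b < 1)"

text \<open>The factors are split into the Z-factors (indices in I, uniformizer power piZ t)
  and the A-factors (indices in J, uniformizer power piA t).  Components outside
  the index sets are fixed to 0.\<close>

type_synonym 'f obar = "(nat \<Rightarrow> nat \<Rightarrow> int) \<times> (nat \<Rightarrow> nat \<Rightarrow> 'f poly)"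

definition Obar :: "nat set \<Rightarrow> nat set \<Rightarrow> (nat \<Rightarrow> int) \<Rightarrow> (nat \<Rightarrow> 'f::field poly) \<Rightarrow> 'f obar set" where
  "Obar I J piZ piA = {(u, w).
     (\<forall>t. if t \<in> I then u t \<in> adic_elems (piZ t) else u t = (\<lambda>_. 0)) \<and>
     (\<forall>t. if t \<in> J then w t \<in> adic_elems (piA t) else w t = (\<lambda>_. 0))}"

definition obar_neg :: "(nat \<Rightarrow> int) \<Rightarrow> (nat \<Rightarrow> 'f::field poly) \<Rightarrow> 'f obar \<Rightarrow> 'f obar" where
  "obar_neg piZ piA x = ((\<lambda>t. adic_neg (piZ t) (fst x t)), (\<lambda>t. adic_neg (piA t) (snd x t)))"

definition obar_phi :: "(nat \<Rightarrow> int) \<Rightarrow> (nat \<Rightarrow> 'f::field poly) \<Rightarrow> 'f obar \<Rightarrow> 'f obar" where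
  "obar_phi piZ piA x = ((\<lambda>t. adic_shift (piZ t) (fst x t)), (\<lambda>t. adic_shift (piA t) (snd x t)))"

definition obar_continuous ::
  "nat set \<Rightarrow> nat set \<Rightarrow> (nat \<Rightarrow> int) \<Rightarrow> (nat \<Rightarrow> 'f::field poly) \<Rightarrow> ('k::field \<Rightarrow> real) \<Rightarrow> ('f obar \<Rightarrow> 'k) \<Rightarrow> bool" where
  "obar_continuous I J piZ piA abv F \<longleftrightarrow>
     (\<forall>x\<in>Obar I J piZ piA. \<forall>\<epsilon>>0. \<exists>N. \<forall>y\<in>Obar I J piZ piA.
        ((\<forall>t\<in>I. fst y t N = fst x t N) \<and> (\<forall>t\<in>J. snd y t N = snd x t N))
        \<longrightarrow> abv (F y - F x) < \<epsilon>)"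

end

theory Submission
  imports Defs
begin

definition perc :: "'a::euclidean_ring \<Rightarrow> nat \<Rightarrow> 'a \<Rightarrow> nat \<Rightarrow> 'a" where
  "perc \<pi> L b n = (b * (\<Sum>i<n. \<pi> ^ (i * L))) mod \<pi> ^ n"

locale adic =
  fixes \<pi> :: "'a::euclidean_ring_cancel"
  assumes pi_nz: "\<pi> \<noteq> 0"
    and div2: "\<And>x m n. x div (\<pi> ^ m * \<pi> ^ n) = x div \<pi> ^ m div \<pi> ^ n"
    and mod2: "\<And>x m n. x mod (\<pi> ^ m * \<pi> ^ n) = \<pi> ^ m * (x div \<pi> ^ m mod \<pi> ^ n) + x mod \<pi> ^ m"
begin

lemma pow_nz[simp]: "\<pi> ^ n \<noteq> 0" using pi_nz by simp

lemma res_div0: "x mod \<pi> ^ m = x \<Longrightarrow> x div \<pi> ^ m = 0"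
proof -
  assume h: "x mod \<pi> ^ m = x"
  have "x div \<pi> ^ m * \<pi> ^ m + x mod \<pi> ^ m = x" by (rule div_mult_mod_eq)
  with h have "x div \<pi> ^ m * \<pi> ^ m = 0" by simp
  then show ?thesis using pi_nz by simp
qed

lemma res_lift: "x mod \<pi> ^ m = x \<Longrightarrow> m \<le> n \<Longrightarrow> x mod \<pi> ^ n = x"
proof -
  assume h: "x mod \<pi> ^ m = x" and mn: "m \<le> n"
  have "\<pi> ^ n = \<pi> ^ m * \<pi> ^ (n - m)" using mn by (simp add: power_add[symmetric])
  then have "x mod \<pi> ^ n = \<pi> ^ m * (x div \<pi> ^ m mod \<pi> ^ (n - m)) + x mod \<pi> ^ m"
    using mod2 by simp
  also have "\<dots> = x" using h res_div0[OF h] by simp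
  finally show ?thesis .
qed

lemma mod_mod_le: "m \<le> n \<Longrightarrow> x mod \<pi> ^ n mod \<pi> ^ m = x mod \<pi> ^ m"
  by (simp add: mod_mod_cancel le_imp_power_dvd)

lemma res_elem: "x \<in> adic_elems \<pi> \<Longrightarrow> x n mod \<pi> ^ n = x n"
  by (simp add: adic_elems_def)

lemma coh: "x \<in> adic_elems \<pi> \<Longrightarrow> m \<le> n \<Longrightarrow> x n mod \<pi> ^ m = x m"
proof (induction n)
  case 0 then show ?case using res_elem[of x 0] by simp
next
  case (Suc n)
  show ?case
  proof (cases "m = Suc n")
    case True then show ?thesis using res_elem[OF Suc.prems(1), of "Suc n"] by simp
  next
    case False
    then have "m \<le> n" using Suc.prems by simp
    have "x (Suc n) mod \<pi> ^ m = x (Suc n) mod \<pi> ^ n mod \<pi> ^ m" using mod_mod_le[OF \<open>m \<le> n\<close>] by simp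
    also have "\<dots> = x n mod \<pi> ^ m" using Suc.prems by (simp add: adic_elems_def)
    also have "\<dots> = x m" using Suc.IH Suc.prems \<open>m \<le> n\<close> by simp
    finally show ?thesis .
  qed
qed

lemma div_add_res: "b mod \<pi> ^ L = b \<Longrightarrow> (b + \<pi> ^ L * c) div \<pi> ^ L = c"
proof -
  assume h: "b mod \<pi> ^ L = b"
  have "(b + \<pi> ^ L * c) div \<pi> ^ L = c + b div \<pi> ^ L" by (rule div_mult_self2) (simp add: pi_nz)
  then show ?thesis using res_div0[OF h] by simp
qed

lemma res_add: "b mod \<pi> ^ L = b \<Longrightarrow> c mod \<pi> ^ n = c \<Longrightarrow> (b + \<pi> ^ L * c) mod \<pi> ^ (L + n) = b + \<pi> ^ L * c"
proof -
  assume hb: "b mod \<pi> ^ L = b" and hc: "c mod \<pi> ^ n = c"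
  have "(b + \<pi> ^ L * c) mod \<pi> ^ (L + n) = \<pi> ^ L * ((b + \<pi> ^ L * c) div \<pi> ^ L mod \<pi> ^ n) + (b + \<pi> ^ L * c) mod \<pi> ^ L"
    using mod2 by (simp add: power_add)
  also have "\<dots> = b + \<pi> ^ L * c" using div_add_res[OF hb] hc hb by (simp add: algebra_simps)
  finally show ?thesis .
qed

lemma shift_iter: "(adic_shift \<pi> ^^ k) x n = x (n + k) div \<pi> ^ k"
proof (induction k arbitrary: n)
  case 0 then show ?case by simp
next
  case (Suc k)
  have "(adic_shift \<pi> ^^ Suc k) x n = (adic_shift \<pi> ^^ k) x (Suc n) div \<pi>"
    by (simp add: adic_shift_def)
  also have "\<dots> = x (Suc n + k) div \<pi> ^ k div \<pi> ^ 1" using Suc.IH by simp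
  also have "\<dots> = x (n + Suc k) div \<pi> ^ Suc k" using div2[of "x (Suc n + k)" k 1] by (simp add: mult.commute)
  finally show ?case .
qed

lemma shift_elem: "x \<in> adic_elems \<pi> \<Longrightarrow> adic_shift \<pi> x \<in> adic_elems \<pi>"
proof -
  assume x: "x \<in> adic_elems \<pi>"
  have A: "y div \<pi> ^ 1 mod \<pi> ^ n = y mod \<pi> ^ (1 + n) div \<pi> ^ 1" for y n
  proof -
    have "y mod \<pi> ^ (1 + n) = \<pi> ^ 1 * (y div \<pi> ^ 1 mod \<pi> ^ n) + y mod \<pi> ^ 1"
      using mod2[of y 1 n] by (simp only: power_add)
    then have "y mod \<pi> ^ (1 + n) div \<pi> ^ 1 = (y mod \<pi> ^ 1 + \<pi> ^ 1 * (y div \<pi> ^ 1 mod \<pi> ^ n)) div \<pi> ^ 1"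
      by (simp add: algebra_simps)
    also have "\<dots> = y div \<pi> ^ 1 mod \<pi> ^ n" by (rule div_add_res) simp
    finally show ?thesis by simp
  qed
  show ?thesis unfolding adic_elems_def adic_shift_def
  proof (intro CollectI allI conjI)
    fix n
    show "x (Suc n) div \<pi> mod \<pi> ^ n = x (Suc n) div \<pi>"
      using A[of "x (Suc n)" n] res_elem[OF x, of "Suc n"] by simp
    show "x (Suc (Suc n)) div \<pi> mod \<pi> ^ n = x (Suc n) div \<pi>"
      using A[of "x (Suc (Suc n))" n] coh[OF x, of "Suc n" "Suc (Suc n)"] by simp
  qed
qed

lemma neg_elem: assumes x0: "x \<in> adic_elems \<pi>" shows "adic_neg \<pi> x \<in> adic_elems \<pi>"
  unfolding adic_elems_def adic_neg_def
proof (intro CollectI allI conjI)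
  fix n have x: "\<forall>n. x n mod \<pi> ^ n = x n \<and> x (Suc n) mod \<pi> ^ n = x n" using x0 by (simp add: adic_elems_def)
  show "- x n mod \<pi> ^ n mod \<pi> ^ n = - x n mod \<pi> ^ n" by simp
  have "- x (Suc n) mod \<pi> ^ Suc n mod \<pi> ^ n = - x (Suc n) mod \<pi> ^ n" by (rule mod_mod_le) simp
  also have "\<dots> = - (x (Suc n) mod \<pi> ^ n) mod \<pi> ^ n" by (simp add: mod_minus_eq)
  also have "\<dots> = - x n mod \<pi> ^ n" using x by simp
  finally show "- x (Suc n) mod \<pi> ^ Suc n mod \<pi> ^ n = - x n mod \<pi> ^ n" .
qed

lemma neg_neg: "x \<in> adic_elems \<pi> \<Longrightarrow> adic_neg \<pi> (adic_neg \<pi> x) = x"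
  unfolding adic_neg_def
proof
  fix n assume x: "x \<in> adic_elems \<pi>"
  have "- (- x n mod \<pi> ^ n) mod \<pi> ^ n = - (- x n) mod \<pi> ^ n" by (simp add: mod_minus_eq)
  then show "- (- x n mod \<pi> ^ n) mod \<pi> ^ n = x n" using res_elem[OF x] by simp
qed


abbreviation S where "S L m \<equiv> (\<Sum>i<m. \<pi> ^ (i * L))"

lemma S_dvd: "n \<le> m * L \<Longrightarrow> m \<le> m' \<Longrightarrow> \<pi> ^ n dvd (S L m' - S L m)"
proof (induction m')
  case 0 then show ?case by simp
next
  case (Suc m')
  show ?case
  proof (cases "m = Suc m'")
    case True then show ?thesis by simp
  next
    case False
    then have "m \<le> m'" using Suc.prems by simp
    have eq: "S L (Suc m') - S L m = (S L m' - S L m) + \<pi> ^ (m' * L)" by (simp add: algebra_simps)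
    have "\<pi> ^ n dvd \<pi> ^ (m' * L)"
      using Suc.prems \<open>m \<le> m'\<close> by (intro le_imp_power_dvd) (meson le_trans mult_le_mono1)
    then show ?thesis unfolding eq using Suc.IH[OF Suc.prems(1) \<open>m \<le> m'\<close>] by (intro dvd_add)
  qed
qed

lemma perc_any: "n \<le> m * L \<Longrightarrow> (b * S L m) mod \<pi> ^ n = perc \<pi> L b n"
proof (cases "n = 0")
  case True then show ?thesis by (simp add: perc_def)
next
  case False
  assume h: "n \<le> m * L"
  with False have "L \<ge> 1" by (cases L) auto
  then have h2: "n \<le> n * L" by simp
  have "\<pi> ^ n dvd (b * S L m - b * S L n)"
  proof (cases "m \<le> n")
    case True
    then have "\<pi> ^ n dvd (S L n - S L m)" using S_dvd h by blast
    then have "\<pi> ^ n dvd - (S L n - S L m)" by (simp only: dvd_minus_iff)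
    then have "\<pi> ^ n dvd (S L m - S L n)" by (simp only: minus_diff_eq)
    then show ?thesis by (simp add: right_diff_distrib[symmetric])
  next
    case False
    then have "\<pi> ^ n dvd (S L m - S L n)" using S_dvd h2 by simp
    then show ?thesis by (simp add: right_diff_distrib[symmetric])
  qed
  then show ?thesis unfolding perc_def by (simp add: mod_eq_dvd_iff)
qed

lemma perc_res: "perc \<pi> L b n mod \<pi> ^ n = perc \<pi> L b n"
  by (simp add: perc_def)

lemma perc_elem: "1 \<le> L \<Longrightarrow> perc \<pi> L b \<in> adic_elems \<pi>"
  unfolding adic_elems_def
proof (intro CollectI allI conjI)
  fix n assume L: "1 \<le> L"
  show "perc \<pi> L b n mod \<pi> ^ n = perc \<pi> L b n" by (rule perc_res)
  have "perc \<pi> L b (Suc n) mod \<pi> ^ n = (b * S L (Suc n)) mod \<pi> ^ n"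
    unfolding perc_def by (rule mod_mod_le) simp
  also have "\<dots> = perc \<pi> L b n"
  proof (rule perc_any)
    have "n \<le> n * L" using L by (metis mult.right_neutral mult_le_mono2)
    then show "n \<le> Suc n * L" by (simp only: mult_Suc)
  qed
  finally show "perc \<pi> L b (Suc n) mod \<pi> ^ n = perc \<pi> L b n" .
qed

lemma perc_low: "n \<le> L \<Longrightarrow> perc \<pi> L b n = b mod \<pi> ^ n"
  using perc_any[of n 1 L b] by simp

lemma S_Suc: "S L (Suc n) = 1 + \<pi> ^ L * S L n"
  by (simp only: sum.lessThan_Suc_shift) (simp add: sum_distrib_left power_add)

lemma perc_period: assumes b: "b mod \<pi> ^ L = b" and L: "1 \<le> L"
  shows "perc \<pi> L b (n + L) = b + \<pi> ^ L * perc \<pi> L b n"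
proof -
  have "perc \<pi> L b (n + L) = (b * S L (Suc n)) mod \<pi> ^ (n + L)"
  proof (rule perc_any[symmetric])
    have "n \<le> n * L" using L by (metis mult.right_neutral mult_le_mono2)
    then show "n + L \<le> Suc n * L" by simp
  qed
  also have "b * S L (Suc n) = b + \<pi> ^ L * (b * S L n)" by (simp only: S_Suc) (simp add: algebra_simps)
  also have "b * S L n = perc \<pi> L b n + \<pi> ^ n * (b * S L n div \<pi> ^ n)"
    unfolding perc_def by (simp add: mod_mult_div_eq add.commute)
  also have "b + \<pi> ^ L * (perc \<pi> L b n + \<pi> ^ n * (b * S L n div \<pi> ^ n))
      = (b + \<pi> ^ L * perc \<pi> L b n) + \<pi> ^ (n + L) * (b * S L n div \<pi> ^ n)"
    by (simp add: algebra_simps power_add)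
  also have "\<dots> mod \<pi> ^ (n + L) = (b + \<pi> ^ L * perc \<pi> L b n) mod \<pi> ^ (L + n)"
    by (simp add: add.commute)
  also have "\<dots> = b + \<pi> ^ L * perc \<pi> L b n" by (rule res_add[OF b perc_res])
  finally show ?thesis .
qed

lemma S_tele: "(1 - \<pi> ^ L) * S L n = 1 - \<pi> ^ (n * L)"
proof (induction n)
  case 0 then show ?case by simp
next
  case (Suc n)
  have "(1 - \<pi> ^ L) * S L (Suc n) = (1 - \<pi> ^ L) + \<pi> ^ L * ((1 - \<pi> ^ L) * S L n)"
    by (simp only: S_Suc) (simp add: algebra_simps)
  also have "\<dots> = 1 - \<pi> ^ (Suc n * L)" unfolding Suc.IH by (simp add: algebra_simps power_add)
  finally show ?case .
qed

lemma perc_cong: assumes L: "1 \<le> L"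
  shows "\<pi> ^ n dvd ((1 - \<pi> ^ L) * perc \<pi> L b n - b)"
proof -
  define q where "q = b * S L n div \<pi> ^ n"
  have e: "perc \<pi> L b n = b * S L n - \<pi> ^ n * q"
    unfolding perc_def q_def by (simp add: minus_mult_div_eq_mod[symmetric])
  have "(1 - \<pi> ^ L) * perc \<pi> L b n - b = b * ((1 - \<pi> ^ L) * S L n) - b - \<pi> ^ n * ((1 - \<pi> ^ L) * q)"
    unfolding e by (simp add: algebra_simps)
  also have "\<dots> = - (b * \<pi> ^ (n * L)) - \<pi> ^ n * ((1 - \<pi> ^ L) * q)"
    by (simp only: S_tele) (simp add: algebra_simps)
  finally have eq: "(1 - \<pi> ^ L) * perc \<pi> L b n - b = - (b * \<pi> ^ (n * L)) - \<pi> ^ n * ((1 - \<pi> ^ L) * q)" .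
  have "\<pi> ^ n dvd \<pi> ^ (n * L)" using L by (intro le_imp_power_dvd) simp
  then show ?thesis unfolding eq by (intro dvd_diff) (simp_all add: dvd_minus_iff)
qed

end

lemma adic_int: "(\<pi>::int) > 0 \<Longrightarrow> adic \<pi>"
  by unfold_locales (auto simp: zdiv_zmult2_eq zmod_zmult2_eq)

lemma adic_poly: "(\<pi>::'f::field poly) \<noteq> 0 \<Longrightarrow> adic \<pi>"
  by unfold_locales (auto simp: poly_div_mult_right poly_mod_mult_right)

lemma fin_res_int: "(\<pi>::int) > 0 \<Longrightarrow> finite {x. x mod \<pi> ^ n = x}"
proof -
  assume p: "\<pi> > 0"
  have "{x. x mod \<pi> ^ n = x} \<subseteq> {0..<\<pi> ^ n}"
  proof
    fix x assume "x \<in> {x. x mod \<pi> ^ n = x}"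
    then have "x mod \<pi> ^ n = x" by simp
    moreover have "0 \<le> x mod \<pi> ^ n" "x mod \<pi> ^ n < \<pi> ^ n" using p by simp_all
    ultimately show "x \<in> {0..<\<pi> ^ n}" by simp
  qed
  then show ?thesis by (rule finite_subset) simp
qed

lemma fin_deg: "finite {x::'f::{finite,field} poly. degree x < d}"
proof -
  have "inj_on (\<lambda>x. map (coeff x) [0..<d]) {x::'f poly. degree x < d}"
  proof (rule inj_onI)
    fix x y :: "'f poly" assume x: "x \<in> {x. degree x < d}" and y: "y \<in> {x. degree x < d}"
      and e: "map (coeff x) [0..<d] = map (coeff y) [0..<d]"
    show "x = y"
    proof (rule poly_eqI)
      fix i
      show "coeff x i = coeff y i"
      proof (cases "i < d")
        case True then show ?thesis using e by (metis (no_types) add_0 diff_zero length_map length_upt nth_map nth_upt)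
      next
        case False then show ?thesis using x y by (simp add: coeff_eq_0)
      qed
    qed
  qed
  moreover have "(\<lambda>x. map (coeff x) [0..<d]) ` {x::'f poly. degree x < d} \<subseteq> {xs. set xs \<subseteq> UNIV \<and> length xs = d}"
    by auto
  moreover have "finite {xs::'f list. set xs \<subseteq> UNIV \<and> length xs = d}"
    by (rule finite_lists_length_eq) simp
  ultimately show ?thesis by (meson finite_imageD finite_subset)
qed

lemma fin_res_poly: "(\<pi>::'f::{finite,field} poly) \<noteq> 0 \<Longrightarrow> finite {x. x mod \<pi> ^ n = x}"
proof -
  assume p: "\<pi> \<noteq> 0"
  have "{x. x mod \<pi> ^ n = x} \<subseteq> insert 0 {x. degree x < degree (\<pi> ^ n)}"
  proof
    fix x assume "x \<in> {x. x mod \<pi> ^ n = x}"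
    then have "x mod \<pi> ^ n = x" by simp
    moreover have "x mod \<pi> ^ n = 0 \<or> degree (x mod \<pi> ^ n) < degree (\<pi> ^ n)"
      using p by (intro degree_mod_less) simp
    ultimately show "x \<in> insert 0 {x. degree x < degree (\<pi> ^ n)}" by auto
  qed
  then show ?thesis by (rule finite_subset) (simp add: fin_deg)
qed

locale nabs =
  fixes abv :: "'k::field \<Rightarrow> real"
  assumes nonarch: "nonarch_abs abv"
begin

lemma ab_nn: "0 \<le> abv x" using nonarch by (simp add: nonarch_abs_def)
lemma ab_0_iff: "abv x = 0 \<longleftrightarrow> x = 0" using nonarch by (simp add: nonarch_abs_def)
lemma ab_mult: "abv (x * y) = abv x * abv y" using nonarch by (simp add: nonarch_abs_def)
lemma ab_ultra: "abv (x + y) \<le> max (abv x) (abv y)" using nonarch by (simp add: nonarch_abs_def)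

lemma ab_0[simp]: "abv 0 = 0" using ab_0_iff by simp
lemma ab_pos: "x \<noteq> 0 \<Longrightarrow> abv x > 0" using ab_0_iff ab_nn by (metis less_eq_real_def)

lemma ab_1[simp]: "abv 1 = 1"
proof -
  have "abv 1 = abv 1 * abv 1" using ab_mult[of 1 1] by simp
  moreover have "abv 1 \<noteq> 0" using ab_0_iff by simp
  ultimately show ?thesis by (metis mult_cancel_right1)
qed

lemma ab_m1[simp]: "abv (-1) = 1"
proof -
  have "abv (-1) * abv (-1) = 1" using ab_mult[of "-1" "-1"] by simp
  then have "(abv (-1) - 1) * (abv (-1) + 1) = 0" by (simp add: algebra_simps)
  moreover have "abv (-1) + 1 \<noteq> 0" using ab_nn[of "-1"] by linarith
  ultimately show ?thesis by simp
qed

lemma ab_minus: "abv (- x) = abv x"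
  using ab_mult[of "-1" x] by simp

lemma ab_diff_sym: "abv (x - y) = abv (y - x)"
  using ab_minus[of "x - y"] by simp

lemma ab_inverse: "abv (inverse x) = inverse (abv x)"
proof (cases "x = 0")
  case True then show ?thesis by simp
next
  case False
  have "abv (inverse x) * abv x = 1" using ab_mult[of "inverse x" x] False by simp
  then show ?thesis by (metis inverse_unique mult.commute)
qed

lemma ab_divide: "abv (x / y) = abv x / abv y"
  by (simp add: divide_inverse ab_mult ab_inverse)

lemma ab_diff_ultra: "abv (x - y) \<le> max (abv x) (abv y)"
  using ab_ultra[of x "- y"] by (simp add: ab_minus)

lemma ab_ultra_lt: "abv x < d \<Longrightarrow> abv y < d \<Longrightarrow> abv (x + y) < d"
  using ab_ultra[of x y] by simp

lemma ab_eq: "abv (x - y) < abv y \<Longrightarrow> abv x = abv y"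
proof -
  assume h: "abv (x - y) < abv y"
  have "abv x \<le> max (abv (x - y)) (abv y)" using ab_ultra[of "x - y" y] by simp
  then have 1: "abv x \<le> abv y" using h by simp
  have "abv y \<le> max (abv (y - x)) (abv x)" using ab_ultra[of "y - x" x] by simp
  then have "abv y \<le> abv x" using h ab_diff_sym[of x y] by (simp add: max_def split: if_splits)
  with 1 show ?thesis by simp
qed

definition near :: "real \<Rightarrow> 'k \<Rightarrow> bool" where "near d a \<longleftrightarrow> abv (a - 1) < d"

lemma near_abv: "near d a \<Longrightarrow> d \<le> 1 \<Longrightarrow> abv a = 1"
  unfolding near_def using ab_eq[of a 1] by simp

lemma near_nz: "near d a \<Longrightarrow> d \<le> 1 \<Longrightarrow> a \<noteq> 0"
  using near_abv by fastforce

lemma near_mult: "near d a \<Longrightarrow> near d b \<Longrightarrow> d \<le> 1 \<Longrightarrow> near d (a * b)"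
proof -
  assume a: "near d a" and b: "near d b" and d: "d \<le> 1"
  have "a * b - 1 = a * (b - 1) + (a - 1)" by (simp add: algebra_simps)
  moreover have "abv (a * (b - 1)) < d" using b near_abv[OF a d] by (simp add: ab_mult near_def)
  ultimately show ?thesis using a unfolding near_def by (metis ab_ultra_lt)
qed

lemma near_inv: "near d a \<Longrightarrow> d \<le> 1 \<Longrightarrow> near d (inverse a)"
proof -
  assume a: "near d a" and d: "d \<le> 1"
  have nz: "a \<noteq> 0" using near_nz[OF a d] .
  have "inverse a - 1 = - ((a - 1) * inverse a)" using nz by (simp add: algebra_simps)
  then have "abv (inverse a - 1) = abv (a - 1)"
    using near_abv[OF a d] by (simp add: ab_minus ab_mult ab_inverse)
  then show ?thesis using a by (simp add: near_def)
qed

lemma near_div: "near d a \<Longrightarrow> near d b \<Longrightarrow> d \<le> 1 \<Longrightarrow> near d (a / b)"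
  by (simp add: divide_inverse near_mult near_inv)

lemma near_one: "d > 0 \<Longrightarrow> near d 1" by (simp add: near_def)

lemma near_prod: "finite S \<Longrightarrow> 0 < d \<Longrightarrow> d \<le> 1 \<Longrightarrow> (\<And>i. i \<in> S \<Longrightarrow> near d (g i)) \<Longrightarrow> near d (\<Prod>i\<in>S. g i)"
proof (induction S rule: finite_induct)
  case empty then show ?case by (simp add: near_one)
next
  case (insert x F) then show ?case by (simp add: near_mult)
qed

lemma near_close: "near d (a / b) \<Longrightarrow> b \<noteq> 0 \<Longrightarrow> abv (a - b) < d * abv b"
proof -
  assume h: "near d (a / b)" and b: "b \<noteq> 0"
  have "a - b = (a / b - 1) * b" using b by (simp add: algebra_simps)
  then have "abv (a - b) = abv (a / b - 1) * abv b" by (simp add: ab_mult)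
  then show ?thesis using h ab_pos[OF b] by (simp add: near_def)
qed

end

lemma prod_split_nat: "(\<Prod>j<N + M. h j) = (\<Prod>j<N. h j) * (\<Prod>i<M. h (N + i))"
  for h :: "nat \<Rightarrow> 'a::comm_monoid_mult" and N M :: nat
  by (induction M) (simp_all add: algebra_simps)

locale livsic = nabs abv
  for abv :: "'k::field \<Rightarrow> real" +
  fixes X :: "'x set" and T :: "'x \<Rightarrow> 'x" and ag :: "nat \<Rightarrow> 'x \<Rightarrow> 'x \<Rightarrow> bool"
    and per :: "nat \<Rightarrow> nat \<Rightarrow> 'x \<Rightarrow> 'x" and z0 :: 'x and f :: "'x \<Rightarrow> 'k"
  assumes TX: "x \<in> X \<Longrightarrow> T x \<in> X"
  and perX: "y \<in> X \<Longrightarrow> 0 < L \<Longrightarrow> per L N y \<in> X"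
  and z0X: "z0 \<in> X" and fz0: "f z0 = 1"
  and ag_sym: "ag n x y \<Longrightarrow> ag n y x" and ag_trans: "ag n x y \<Longrightarrow> ag n y z \<Longrightarrow> ag n x z"
  and ag0: "x \<in> X \<Longrightarrow> y \<in> X \<Longrightarrow> ag 0 x y"
  and ag_mono: "x \<in> X \<Longrightarrow> y \<in> X \<Longrightarrow> ag m x y \<Longrightarrow> n \<le> m \<Longrightarrow> ag n x y"
  and ag_T: "x \<in> X \<Longrightarrow> y \<in> X \<Longrightarrow> ag (n + k) x y \<Longrightarrow> ag n ((T^^k) x) ((T^^k) y)"
  and per_orbit: "y \<in> X \<Longrightarrow> N < L \<Longrightarrow> (\<Prod>j<L. f ((T^^j) (per L N y))) = 1"
  and per_L: "y \<in> X \<Longrightarrow> 0 < L \<Longrightarrow> 0 < L' \<Longrightarrow> N \<le> L \<Longrightarrow> N \<le> L' \<Longrightarrow> n \<le> L \<Longrightarrow> n \<le> L'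
      \<Longrightarrow> ag n (per L N y) (per L' N y)"
  and per_z: "y \<in> X \<Longrightarrow> N < L \<Longrightarrow> ag (L - N) ((T^^N) (per L N y)) z0"
  and per_step: "y \<in> X \<Longrightarrow> N + 1 < L
      \<Longrightarrow> ag (L - 1) ((T^^(N+1)) (per L N y)) ((T^^(N+1)) (per L (N+1) y))"
  and per_shift: "y \<in> X \<Longrightarrow> 1 \<le> N \<Longrightarrow> N < L \<Longrightarrow> ag (L - 1) (T (per L N y)) (per L (N - 1) (T y))"
  and per_y: "y \<in> X \<Longrightarrow> N < L \<Longrightarrow> ag N (per L N y) y"
  and per_loc: "x \<in> X \<Longrightarrow> y \<in> X \<Longrightarrow> ag N x y \<Longrightarrow> per L N x = per L N y"
  and reps: "\<exists>R. finite R \<and> R \<subseteq> X \<and> (\<forall>x\<in>X. \<exists>r\<in>R. ag k x r)"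
  and limit: "(\<And>k. s k \<in> X \<and> ag k (s (Suc k)) (s k)) \<Longrightarrow> \<exists>x\<in>X. \<forall>k. ag k x (s k)"
  and cont: "x \<in> X \<Longrightarrow> \<epsilon> > 0 \<Longrightarrow> \<exists>N. \<forall>y\<in>X. ag N y x \<longrightarrow> abv (f y - f x) < \<epsilon>"
  and fnz: "x \<in> X \<Longrightarrow> f x \<noteq> 0"
  and compl: "abv_complete abv"
begin

lemma iterX: "x \<in> X \<Longrightarrow> (T^^j) x \<in> X"
  by (induction j) (simp_all add: TX)

lemma ag_T': "x \<in> X \<Longrightarrow> y \<in> X \<Longrightarrow> ag m x y \<Longrightarrow> n + k \<le> m \<Longrightarrow> ag n ((T^^k) x) ((T^^k) y)"
  using ag_T ag_mono by blast

definition UCk :: "nat \<Rightarrow> real \<Rightarrow> bool" where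
  "UCk k \<epsilon> \<longleftrightarrow> (\<forall>x\<in>X. \<forall>y\<in>X. ag k x y \<longrightarrow> near \<epsilon> (f x / f y))"

lemma UC: assumes e: "\<epsilon> > 0" shows "\<exists>k. UCk k \<epsilon>"
proof (rule ccontr)
  assume "\<not> (\<exists>k. UCk k \<epsilon>)"
  then have H: "\<forall>k. \<exists>x\<in>X. \<exists>y\<in>X. ag k x y \<and> \<not> near \<epsilon> (f x / f y)" by (auto simp: UCk_def)
  define bad where "bad k c \<longleftrightarrow> (\<forall>m\<ge>k. \<exists>x\<in>X. \<exists>y\<in>X. ag k x c \<and> ag m x y \<and> \<not> near \<epsilon> (f x / f y))" for k c
  have bad0: "bad 0 z0" unfolding bad_def
  proof (intro allI impI)
    fix m :: nat
    obtain x y where "x \<in> X" "y \<in> X" "ag m x y" "\<not> near \<epsilon> (f x / f y)" using H by blast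
    moreover have "ag 0 x z0" using ag0 z0X \<open>x \<in> X\<close> by blast
    ultimately show "\<exists>x\<in>X. \<exists>y\<in>X. ag 0 x z0 \<and> ag m x y \<and> \<not> near \<epsilon> (f x / f y)" by blast
  qed
  have step: "\<exists>c'\<in>X. ag k c' c \<and> bad (Suc k) c'" if c: "c \<in> X" and bc: "bad k c" for k c
  proof (rule ccontr)
    assume nc: "\<not> (\<exists>c'\<in>X. ag k c' c \<and> bad (Suc k) c')"
    obtain R where R: "finite R" "R \<subseteq> X" "\<forall>x\<in>X. \<exists>r\<in>R. ag (Suc k) x r" using reps[of "Suc k"] by blast
    define R' where "R' = {r\<in>R. ag k r c}"
    have nb: "\<exists>m\<ge>Suc k. \<forall>x\<in>X. \<forall>y\<in>X. \<not> (ag (Suc k) x r \<and> ag m x y \<and> \<not> near \<epsilon> (f x / f y))"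
      if "r \<in> R'" for r
    proof -
      have "r \<in> X" "ag k r c" using that R(2) unfolding R'_def by auto
      then have "\<not> bad (Suc k) r" using nc by blast
      then show ?thesis unfolding bad_def by blast
    qed
    define M where "M r = (SOME m. m \<ge> Suc k \<and> (\<forall>x\<in>X. \<forall>y\<in>X. \<not> (ag (Suc k) x r \<and> ag m x y \<and> \<not> near \<epsilon> (f x / f y))))" for r
    have M: "M r \<ge> Suc k \<and> (\<forall>x\<in>X. \<forall>y\<in>X. \<not> (ag (Suc k) x r \<and> ag (M r) x y \<and> \<not> near \<epsilon> (f x / f y)))"
      if "r \<in> R'" for r
      unfolding M_def by (rule someI_ex) (use nb[OF that] in blast)
    define M0 where "M0 = Suc k + (\<Sum>r\<in>R'. M r)"
    have fR': "finite R'" using R(1) unfolding R'_def by simp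
    have M0r: "M r \<le> M0" if "r \<in> R'" for r
      using member_le_sum[OF that, of M, OF _ fR'] unfolding M0_def by simp
    have "M0 \<ge> k" unfolding M0_def by simp
    from bc[unfolded bad_def, rule_format, OF this]
    obtain x y where xy: "x \<in> X" "y \<in> X" "ag k x c" "ag M0 x y" "\<not> near \<epsilon> (f x / f y)"
      by blast
    obtain r where r: "r \<in> R" "ag (Suc k) x r" using R(3) xy(1) by blast
    have rX: "r \<in> X" using R(2) r(1) by blast
    have akxr: "ag k x r" using ag_mono[OF xy(1) rX r(2)] by simp
    have "ag k r c" using ag_trans[OF ag_sym[OF akxr] xy(3)] by simp
    then have rR': "r \<in> R'" using r(1) unfolding R'_def by simp
    have "ag (M r) x y" using ag_mono[OF xy(1) xy(2) xy(4) M0r[OF rR']] .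
    then show False using M[OF rR'] xy r(2) by blast
  qed
  define c where "c = rec_nat z0 (\<lambda>k ck. SOME c'. c' \<in> X \<and> ag k c' ck \<and> bad (Suc k) c')"
  have c0: "c 0 = z0" unfolding c_def by simp
  have cS: "c (Suc k) = (SOME c'. c' \<in> X \<and> ag k c' (c k) \<and> bad (Suc k) c')" for k
    unfolding c_def by simp
  have cprop: "c k \<in> X \<and> bad k (c k)" for k
  proof (induction k)
    case 0 then show ?case using c0 z0X bad0 by simp
  next
    case (Suc k)
    have "\<exists>c'. c' \<in> X \<and> ag k c' (c k) \<and> bad (Suc k) c'" using step Suc by blast
    then have "c (Suc k) \<in> X \<and> ag k (c (Suc k)) (c k) \<and> bad (Suc k) (c (Suc k))"
      unfolding cS by (rule someI_ex)
    then show ?case by simp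
  qed
  have cag: "ag k (c (Suc k)) (c k)" for k
  proof -
    have "\<exists>c'. c' \<in> X \<and> ag k c' (c k) \<and> bad (Suc k) c'" using step cprop by blast
    then have "c (Suc k) \<in> X \<and> ag k (c (Suc k)) (c k) \<and> bad (Suc k) (c (Suc k))"
      unfolding cS by (rule someI_ex)
    then show ?thesis by simp
  qed
  obtain xs where xs: "xs \<in> X" "\<forall>k. ag k xs (c k)" using limit[of c] cprop cag by blast
  have fxs: "abv (f xs) > 0" using fnz[OF xs(1)] ab_pos by blast
  define e' where "e' = min \<epsilon> 1 * abv (f xs)"
  have e'pos: "e' > 0" unfolding e'_def using e fxs by simp
  obtain N where N: "\<forall>y\<in>X. ag N y xs \<longrightarrow> abv (f y - f xs) < e'" using cont[OF xs(1) e'pos] by blast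
  obtain x y where xy: "x \<in> X" "y \<in> X" "ag N x (c N)" "ag N x y" "\<not> near \<epsilon> (f x / f y)"
    using cprop[of N] unfolding bad_def by blast
  have "ag N x xs" using ag_trans[OF xy(3) ag_sym[OF xs(2)[rule_format, of N]]] .
  then have ax: "abv (f x - f xs) < e'" using N xy(1) by blast
  have "ag N y xs" using ag_trans[OF ag_sym[OF xy(4)] \<open>ag N x xs\<close>] .
  then have ay: "abv (f y - f xs) < e'" using N xy(2) by blast
  have e'le: "e' \<le> abv (f xs)" unfolding e'_def using fxs by (simp add: mult_le_cancel_right1)
  have fy: "abv (f y) = abv (f xs)" using ab_eq[of "f y" "f xs"] less_le_trans[OF ay e'le] by simp
  have "abv (f x - f y) < e'"
  proof -
    have "f x - f y = (f x - f xs) + - (f y - f xs)" by simp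
    moreover have "abv (- (f y - f xs)) < e'" using ay by (simp only: ab_minus)
    ultimately show ?thesis using ab_ultra_lt[OF ax] by metis
  qed
  moreover have "f x / f y - 1 = (f x - f y) / f y" using fnz[OF xy(2)] by (simp add: field_simps)
  ultimately have "abv (f x / f y - 1) < e' / abv (f xs)" using fy fxs by (simp add: ab_divide divide_strict_right_mono)
  also have "e' / abv (f xs) \<le> \<epsilon>" unfolding e'_def using fxs by simp
  finally show False using xy(5) by (simp add: near_def)
qed

end

context livsic begin

definition A :: "nat \<Rightarrow> nat \<Rightarrow> 'x \<Rightarrow> 'k" where
  "A N L y = (\<Prod>j<N. f ((T^^j) (per L N y)))"

definition g :: "nat \<Rightarrow> 'x \<Rightarrow> 'k" where "g N y = A N (2 * N) y"

lemma iter_perX: "y \<in> X \<Longrightarrow> 0 < L \<Longrightarrow> (T^^j) (per L N y) \<in> X"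
  by (intro iterX perX)

lemma A_nz: assumes y: "y \<in> X" and L: "0 < L" shows "A N L y \<noteq> 0"
  using fnz[OF iter_perX[OF y L]] by (simp add: A_def)

lemma S1: assumes U: "UCk k \<epsilon>" and e: "0 < \<epsilon>" "\<epsilon> \<le> 1" and y: "y \<in> X"
  and N: "1 \<le> N" "N \<le> L" "L \<le> L'" "k + N \<le> L"
  shows "near \<epsilon> (A N L y / A N L' y)"
proof -
  have L0: "0 < L" "0 < L'" using N by auto
  have "A N L y / A N L' y = (\<Prod>j<N. f ((T^^j) (per L N y)) / f ((T^^j) (per L' N y)))"
    unfolding A_def by (simp add: prod_dividef)
  also have "near \<epsilon> \<dots>"
  proof (rule near_prod)
    fix j assume j: "j \<in> {..<N}"
    have a: "ag L (per L N y) (per L' N y)" using per_L[OF y L0] N by simp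
    have "ag k ((T^^j) (per L N y)) ((T^^j) (per L' N y))"
      using ag_T'[OF perX[OF y L0(1)] perX[OF y L0(2)] a] j N by simp
    then show "near \<epsilon> (f ((T^^j) (per L N y)) / f ((T^^j) (per L' N y)))"
      using U iter_perX[OF y L0(1)] iter_perX[OF y L0(2)] unfolding UCk_def by blast
  qed (use e in auto)
  finally show ?thesis .
qed

lemma S2: assumes U: "UCk k \<epsilon>" and e: "0 < \<epsilon>" "\<epsilon> \<le> 1" and y: "y \<in> X"
  and N: "N + 1 < L" "k + N \<le> L" "k \<le> N"
  shows "near \<epsilon> (A (Suc N) L y / A N L y)"
proof -
  define p where "p = per L N y"
  define p' where "p' = per L (Suc N) y"
  define M where "M = L - N - 1"
  have L0: "0 < L" using N by simp
  have pX: "p \<in> X" "p' \<in> X" unfolding p_def p'_def using perX[OF y L0] by auto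
  have LM: "L = N + Suc M" "L = Suc N + M" unfolding M_def using N by auto
  define U where "U = (\<Prod>i<M. f ((T^^(Suc N + i)) p))"
  define U' where "U' = (\<Prod>i<M. f ((T^^(Suc N + i)) p'))"
  have o1: "A N L y * (f ((T^^N) p) * U) = 1"
  proof -
    have "(\<Prod>j<L. f ((T^^j) p)) = 1" unfolding p_def using per_orbit[OF y] N by simp
    then have "(\<Prod>j<N + Suc M. f ((T^^j) p)) = 1" using LM by simp
    then show ?thesis unfolding prod_split_nat prod.lessThan_Suc_shift A_def U_def p_def
      by (simp add: add.commute)
  qed
  have o2: "A (Suc N) L y * U' = 1"
  proof -
    have "(\<Prod>j<L. f ((T^^j) p')) = 1" unfolding p'_def using per_orbit[OF y] N by simp
    then have "(\<Prod>j<Suc N + M. f ((T^^j) p')) = 1" using LM by simp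
    then show ?thesis unfolding prod_split_nat A_def U'_def p'_def by simp
  qed
  have nz: "f ((T^^N) p) \<noteq> 0" "U \<noteq> 0" "U' \<noteq> 0" "A N L y \<noteq> 0"
    using o1 o2 by auto
  have eq: "A (Suc N) L y / A N L y = (f ((T^^N) p) / f z0) * (U / U')"
  proof -
    have "A (Suc N) L y = 1 / U'" using o2 nz by (simp add: field_simps)
    moreover have "A N L y = 1 / (f ((T^^N) p) * U)" using o1 nz by (simp add: field_simps)
    ultimately show ?thesis using nz fz0 by (simp add: field_simps)
  qed
  have n1: "near \<epsilon> (f ((T^^N) p) / f z0)"
  proof -
    have "ag (L - N) ((T^^N) p) z0" unfolding p_def using per_z[OF y] N by simp
    then have "ag k ((T^^N) p) z0" using ag_mono[OF iterX[OF pX(1)] z0X] N by simp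
    then show ?thesis using U iterX[OF pX(1)] z0X unfolding UCk_def by blast
  qed
  have n2: "near \<epsilon> (U / U')"
    unfolding U_def U'_def prod_dividef[symmetric]
  proof (rule near_prod)
    fix i assume i: "i \<in> {..<M}"
    have a: "ag (L - 1) ((T^^(N+1)) p) ((T^^(N+1)) p')" unfolding p_def p'_def using per_step[OF y] N by simp
    have "ag k ((T^^i) ((T^^(N+1)) p)) ((T^^i) ((T^^(N+1)) p'))"
      using ag_T'[OF iterX[OF pX(1)] iterX[OF pX(2)] a] i N unfolding M_def by simp
    moreover have fe: "(T^^(Suc N + i)) z = (T^^i) ((T^^(N+1)) z)" for z
      by (metis Suc_eq_plus1 add.commute comp_apply funpow_add)
    ultimately have "ag k ((T^^(Suc N + i)) p) ((T^^(Suc N + i)) p')"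
      by simp
    then show "near \<epsilon> (f ((T^^(Suc N + i)) p) / f ((T^^(Suc N + i)) p'))"
      using U iterX[OF pX(1)] iterX[OF pX(2)] unfolding UCk_def by blast
  qed (use e in auto)
  show ?thesis unfolding eq using near_mult[OF n1 n2 e(2)] .
qed

lemma S3: assumes U: "UCk k \<epsilon>" and e: "0 < \<epsilon>" "\<epsilon> \<le> 1" and y: "y \<in> X"
  and N: "1 \<le> N" "N < L" "k \<le> N" "k + N \<le> L"
  shows "near \<epsilon> (A N L y / (f y * A (N - 1) L (T y)))"
proof -
  define p where "p = per L N y"
  define q where "q = per L (N - 1) (T y)"
  have L0: "0 < L" using N by simp
  have pX: "p \<in> X" "q \<in> X" unfolding p_def q_def using perX[OF y L0] perX[OF TX[OF y] L0] by auto
  have NS: "N = Suc (N - 1)" using N by simp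
  have eA: "A N L y = f p * (\<Prod>i<N - 1. f ((T^^i) (T p)))"
  proof -
    have "A N L y = (\<Prod>j<Suc (N - 1). f ((T^^j) p))" unfolding A_def p_def using NS by simp
    also have "\<dots> = f p * (\<Prod>i<N - 1. f ((T^^i) (T p)))"
      unfolding prod.lessThan_Suc_shift by (simp add: funpow_Suc_right del: funpow.simps)
    finally show ?thesis .
  qed
  have eB: "A (N - 1) L (T y) = (\<Prod>i<N - 1. f ((T^^i) q))" unfolding A_def q_def by simp
  have eq: "A N L y / (f y * A (N - 1) L (T y)) = (f p / f y) * (\<Prod>i<N - 1. f ((T^^i) (T p)) / f ((T^^i) q))"
    unfolding eA eB prod_dividef by (simp add: field_simps)
  have n1: "near \<epsilon> (f p / f y)"
  proof -
    have "ag N p y" unfolding p_def using per_y[OF y] N by simp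
    then have "ag k p y" using ag_mono[OF pX(1) y] N by simp
    then show ?thesis using U pX(1) y unfolding UCk_def by blast
  qed
  have n2: "near \<epsilon> (\<Prod>i<N - 1. f ((T^^i) (T p)) / f ((T^^i) q))"
  proof (rule near_prod)
    fix i assume i: "i \<in> {..<N - 1}"
    have a: "ag (L - 1) (T p) q" unfolding p_def q_def using per_shift[OF y] N by simp
    have "ag k ((T^^i) (T p)) ((T^^i) q)"
      using ag_T'[OF TX[OF pX(1)] pX(2) a] i N by simp
    then show "near \<epsilon> (f ((T^^i) (T p)) / f ((T^^i) q))"
      using U iterX[OF TX[OF pX(1)]] iterX[OF pX(2)] unfolding UCk_def by blast
  qed (use e in auto)
  show ?thesis unfolding eq using near_mult[OF n1 n2 e(2)] .
qed

end

context livsic begin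

lemma g_nz: "y \<in> X \<Longrightarrow> 1 \<le> N \<Longrightarrow> g N y \<noteq> 0"
  unfolding g_def by (rule A_nz) auto

lemma g_step: assumes U: "UCk k \<epsilon>" and e: "0 < \<epsilon>" "\<epsilon> \<le> 1" and y: "y \<in> X" and N: "k + 2 \<le> N"
  shows "near \<epsilon> (g (Suc N) y / g N y)"
proof -
  have a: "near \<epsilon> (A (Suc N) (2 * N) y / A (Suc N) (2 * Suc N) y)"
    by (rule S1[OF U e y]) (use N in auto)
  have b: "near \<epsilon> (A (Suc N) (2 * N) y / A N (2 * N) y)"
    by (rule S2[OF U e y]) (use N in auto)
  have nz: "A (Suc N) (2 * N) y \<noteq> 0" "A (Suc N) (2 * Suc N) y \<noteq> 0" "A N (2 * N) y \<noteq> 0"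
    using A_nz[OF y] N by auto
  have "g (Suc N) y / g N y = inverse (A (Suc N) (2 * N) y / A (Suc N) (2 * Suc N) y) * (A (Suc N) (2 * N) y / A N (2 * N) y)"
    unfolding g_def using nz by (simp add: field_simps)
  then show ?thesis using near_mult[OF near_inv[OF a e(2)] b e(2)] by simp
qed

lemma g_far: assumes U: "UCk k \<epsilon>" and e: "0 < \<epsilon>" "\<epsilon> \<le> 1" and y: "y \<in> X" and n: "k + 2 \<le> n"
  shows "n \<le> m \<Longrightarrow> near \<epsilon> (g m y / g n y)"
proof (induction m)
  case 0 then show ?case using n by simp
next
  case (Suc m)
  show ?case
  proof (cases "n = Suc m")
    case True then show ?thesis using g_nz[OF y, of n] n e by (simp add: near_one)
  next
    case False
    then have nm: "n \<le> m" using Suc.prems by simp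
    have gm: "g m y \<noteq> 0" using g_nz[OF y, of m] nm n by simp
    have eq: "g (Suc m) y / g n y = (g (Suc m) y / g m y) * (g m y / g n y)"
      using gm by simp
    have s: "near \<epsilon> (g (Suc m) y / g m y)" by (rule g_step[OF U e y]) (use nm n in simp)
    show ?thesis unfolding eq by (rule near_mult[OF s Suc.IH[OF nm] e(2)])
  qed
qed

lemma UC1: "\<exists>k. UCk k 1" using UC by simp

definition conv :: "(nat \<Rightarrow> 'k) \<Rightarrow> 'k \<Rightarrow> bool" where
  "conv s l \<longleftrightarrow> (\<forall>e>0. \<exists>N. \<forall>n\<ge>N. abv (s n - l) < e)"

lemma g_conv: assumes y: "y \<in> X" shows "\<exists>l. conv (\<lambda>n. g n y) l"
proof -
  obtain k1 where k1: "UCk k1 1" using UC1 by blast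
  define n1 where "n1 = k1 + 2"
  define c where "c = abv (g n1 y)"
  have c: "c > 0" unfolding c_def n1_def using g_nz[OF y] ab_pos by simp
  have cm: "abv (g m y) = c" if "m \<ge> n1" for m
  proof -
    have "near 1 (g m y / g n1 y)" using g_far[OF k1 _ _ y] that unfolding n1_def by simp
    then have "abv (g m y / g n1 y) = 1" using near_abv by simp
    then show ?thesis unfolding c_def using c c_def by (simp add: ab_divide)
  qed
  have "\<forall>e>0. \<exists>N. \<forall>m\<ge>N. \<forall>n\<ge>N. abv (g m y - g n y) < e"
  proof (intro allI impI)
    fix e :: real assume e: "e > 0"
    define \<epsilon> where "\<epsilon> = min 1 (e / c)"
    have ep: "0 < \<epsilon>" "\<epsilon> \<le> 1" unfolding \<epsilon>_def using e c by auto
    obtain k where k: "UCk k \<epsilon>" using UC ep by blast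
    define N where "N = max (k + 2) n1"
    have key: "abv (g m y - g n y) < e" if "N \<le> n" "n \<le> m" for m n
    proof -
      have "near \<epsilon> (g m y / g n y)" using g_far[OF k ep y] that unfolding N_def by simp
      then have "abv (g m y - g n y) < \<epsilon> * abv (g n y)"
        using g_nz[OF y, of n] that unfolding N_def by (intro near_close) auto
      also have "abv (g n y) = c" using cm that unfolding N_def by simp
      also have "\<epsilon> * c \<le> e" unfolding \<epsilon>_def using c e by (simp add: min_def field_simps)
      finally show ?thesis .
    qed
    show "\<exists>N. \<forall>m\<ge>N. \<forall>n\<ge>N. abv (g m y - g n y) < e"
    proof (intro exI allI impI)
      fix m n assume "N \<le> m" "N \<le> n"
      then show "abv (g m y - g n y) < e"
        using key[of n m] key[of m n] ab_diff_sym[of "g m y" "g n y"] by (cases "n \<le> m") auto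
    qed
  qed
  moreover have "(\<forall>e>0. \<exists>N. \<forall>m\<ge>N. \<forall>n\<ge>N. abv (g m y - g n y) < e) \<longrightarrow> (\<exists>l. \<forall>e>0. \<exists>N. \<forall>n\<ge>N. abv (g n y - l) < e)"
    using compl unfolding abv_complete_def by (rule allE[of _ "\<lambda>n. g n y"])
  ultimately show ?thesis unfolding conv_def by blast
qed

definition Gl :: "'x \<Rightarrow> 'k" where "Gl y = (SOME l. conv (\<lambda>n. g n y) l)"

lemma Gl_conv: "y \<in> X \<Longrightarrow> conv (\<lambda>n. g n y) (Gl y)"
  unfolding Gl_def using g_conv by (rule someI_ex)

lemma G2: assumes U: "UCk k \<epsilon>" and e: "0 < \<epsilon>" "\<epsilon> \<le> 1" and y: "y \<in> X" and n: "k + 2 \<le> n"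
  shows "near \<epsilon> (Gl y / g n y)"
proof -
  have gn: "g n y \<noteq> 0" using g_nz[OF y] n by simp
  have pos: "\<epsilon> * abv (g n y) > 0" using e ab_pos[OF gn] by simp
  obtain M where M: "\<forall>m\<ge>M. abv (g m y - Gl y) < \<epsilon> * abv (g n y)"
    using Gl_conv[OF y] pos unfolding conv_def by blast
  define m where "m = max M n"
  have a: "abv (g m y - Gl y) < \<epsilon> * abv (g n y)" using M unfolding m_def by simp
  have b: "near \<epsilon> (g m y / g n y)" using g_far[OF U e y n] unfolding m_def by simp
  have "Gl y / g n y - 1 = - ((g m y - Gl y) / g n y) + (g m y / g n y - 1)"
    using gn by (simp add: field_simps)
  moreover have "abv (- ((g m y - Gl y) / g n y)) < \<epsilon>"
    using a ab_pos[OF gn] by (simp add: ab_minus ab_divide pos_divide_less_eq)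
  ultimately show ?thesis using b unfolding near_def by (metis ab_ultra_lt)
qed

lemma Gl_nz: assumes y: "y \<in> X" shows "Gl y \<noteq> 0"
proof -
  obtain k where k: "UCk k 1" using UC1 by blast
  have "near 1 (Gl y / g (k + 2) y)" by (rule G2[OF k _ _ y]) auto
  then show ?thesis using near_nz by fastforce
qed

lemma g_loc: "x \<in> X \<Longrightarrow> y \<in> X \<Longrightarrow> ag N x y \<Longrightarrow> g N x = g N y"
  unfolding g_def A_def using per_loc by simp

lemma Gl_cont: assumes x: "x \<in> X" and e: "e > 0"
  shows "\<exists>N. \<forall>y\<in>X. ag N y x \<longrightarrow> abv (Gl y - Gl x) < e"
proof -
  define c where "c = abv (Gl x)"
  have c: "c > 0" unfolding c_def using Gl_nz[OF x] ab_pos by blast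
  define \<epsilon> where "\<epsilon> = min 1 (e / c)"
  have ep: "0 < \<epsilon>" "\<epsilon> \<le> 1" unfolding \<epsilon>_def using e c by auto
  obtain k where k: "UCk k \<epsilon>" using UC ep by blast
  show ?thesis
  proof (intro exI ballI impI)
    fix y assume y: "y \<in> X" and a: "ag (k + 2) y x"
    have gg: "g (k + 2) y = g (k + 2) x" using g_loc[OF y x a] .
    have n1: "near \<epsilon> (Gl y / g (k + 2) y)" by (rule G2[OF k ep y]) simp
    have n2: "near \<epsilon> (Gl x / g (k + 2) x)" by (rule G2[OF k ep x]) simp
    have "Gl y / Gl x = (Gl y / g (k + 2) y) / (Gl x / g (k + 2) x)"
      using gg g_nz[OF x, of "k+2"] Gl_nz[OF x] by simp
    then have "near \<epsilon> (Gl y / Gl x)" using near_div[OF n1 n2 ep(2)] by simp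
    then have "abv (Gl y - Gl x) < \<epsilon> * c" unfolding c_def using Gl_nz[OF x] by (intro near_close)
    also have "\<epsilon> * c \<le> e" unfolding \<epsilon>_def using c e by (simp add: min_def field_simps)
    finally show "abv (Gl y - Gl x) < e" .
  qed
qed

lemma Gl_eq: assumes y: "y \<in> X" shows "Gl y = f y * Gl (T y)"
proof -
  have Ty: "T y \<in> X" using TX[OF y] .
  have nz: "f y * Gl (T y) \<noteq> 0" using fnz[OF y] Gl_nz[OF Ty] by simp
  have near_all: "near \<epsilon> (Gl y / (f y * Gl (T y)))" if ep: "0 < \<epsilon>" "\<epsilon> \<le> 1" for \<epsilon>
  proof -
    obtain k where k: "UCk k \<epsilon>" using UC ep by blast
    define N where "N = k + 3"
    have a1: "near \<epsilon> (Gl y / g N y)" by (rule G2[OF k ep y]) (simp add: N_def)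
    have a2: "near \<epsilon> (A N (2 * N) y / (f y * A (N - 1) (2 * N) (T y)))"
      by (rule S3[OF k ep y]) (auto simp: N_def)
    have a3: "near \<epsilon> (A (N - 1) (2 * (N - 1)) (T y) / A (N - 1) (2 * N) (T y))"
      by (rule S1[OF k ep Ty]) (auto simp: N_def)
    have a4: "near \<epsilon> (Gl (T y) / g (N - 1) (T y))" by (rule G2[OF k ep Ty]) (simp add: N_def)
    have nzs: "g N y \<noteq> 0" "A (N - 1) (2 * N) (T y) \<noteq> 0" "A (N - 1) (2 * (N - 1)) (T y) \<noteq> 0"
      "Gl (T y) \<noteq> 0" "f y \<noteq> 0"
      using g_nz[OF y, of N] A_nz[OF Ty] Gl_nz[OF Ty] fnz[OF y] by (auto simp: N_def)
    have "Gl y / (f y * Gl (T y)) = (Gl y / g N y) * (A N (2 * N) y / (f y * A (N - 1) (2 * N) (T y)))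
        * inverse (A (N - 1) (2 * (N - 1)) (T y) / A (N - 1) (2 * N) (T y)) * inverse (Gl (T y) / g (N - 1) (T y))"
      using nzs unfolding g_def by (simp add: field_simps)
    then show ?thesis
      using near_mult[OF near_mult[OF near_mult[OF a1 a2 ep(2)] near_inv[OF a3 ep(2)] ep(2)] near_inv[OF a4 ep(2)] ep(2)]
      by simp
  qed
  have "Gl y / (f y * Gl (T y)) = 1"
  proof (rule ccontr)
    assume ne: "Gl y / (f y * Gl (T y)) \<noteq> 1"
    define d where "d = min 1 (abv (Gl y / (f y * Gl (T y)) - 1))"
    have "d > 0" unfolding d_def using ne ab_pos by simp
    then have "near d (Gl y / (f y * Gl (T y)))" using near_all d_def by simp
    then show False unfolding near_def d_def by simp
  qed
  then show ?thesis using nz by (simp add: field_simps)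
qed

theorem livsic_main:
  "\<exists>G. (\<forall>x\<in>X. \<forall>e>0. \<exists>N. \<forall>y\<in>X. ag N y x \<longrightarrow> abv (G y - G x) < e)
     \<and> (\<forall>x\<in>X. G x \<noteq> 0) \<and> (\<forall>y\<in>X. G y = f y * G (T y))"
  using Gl_cont Gl_nz Gl_eq by blast

end

lemma zero_elem: "(\<lambda>_. 0) \<in> adic_elems \<pi>" by (simp add: adic_elems_def)
lemma perc_zero: "perc \<pi> L 0 = (\<lambda>_. 0)" by (simp add: perc_def fun_eq_iff)
lemma shift_zero: "adic_shift \<pi> (\<lambda>_. 0) = (\<lambda>_. 0)" by (simp add: adic_shift_def fun_eq_iff)
lemma shift_iter_zero: "(adic_shift \<pi> ^^ k) (\<lambda>_. 0) = (\<lambda>_. 0)"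
  by (induction k) (simp_all add: shift_zero)
lemma neg_zero: "adic_neg \<pi> (\<lambda>_. 0) = (\<lambda>_. 0)" by (simp add: adic_neg_def fun_eq_iff)

context adic begin

lemma elem0: "x \<in> adic_elems \<pi> \<Longrightarrow> x 0 = 0"
  using res_elem[of x 0] by simp

lemma yres: "y \<in> adic_elems \<pi> \<Longrightarrow> N \<le> L \<Longrightarrow> y N mod \<pi> ^ L = y N"
  using res_lift res_elem by blast

lemma cp_y: "y \<in> adic_elems \<pi> \<Longrightarrow> N \<le> L \<Longrightarrow> perc \<pi> L (y N) N = y N"
  using perc_low res_elem by simp

lemma cp_L: "N \<le> L \<Longrightarrow> N \<le> L' \<Longrightarrow> n \<le> L \<Longrightarrow> n \<le> L' \<Longrightarrow> perc \<pi> L b n = perc \<pi> L' b n"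
  using perc_low by simp

lemma cp_period: assumes y: "y \<in> adic_elems \<pi>" and L: "1 \<le> L" "N \<le> L"
  shows "(adic_shift \<pi> ^^ L) (perc \<pi> L (y N)) = perc \<pi> L (y N)"
proof
  fix n
  have b: "y N mod \<pi> ^ L = y N" using yres[OF y L(2)] .
  have "(adic_shift \<pi> ^^ L) (perc \<pi> L (y N)) n = perc \<pi> L (y N) (n + L) div \<pi> ^ L" by (rule shift_iter)
  also have "\<dots> = (y N + \<pi> ^ L * perc \<pi> L (y N) n) div \<pi> ^ L" using perc_period[OF b L(1)] by simp
  also have "\<dots> = perc \<pi> L (y N) n" by (rule div_add_res[OF b])
  finally show "(adic_shift \<pi> ^^ L) (perc \<pi> L (y N)) n = perc \<pi> L (y N) n" .
qed

lemma cp_z: assumes y: "y \<in> adic_elems \<pi>" and L: "N < L"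
  shows "(adic_shift \<pi> ^^ N) (perc \<pi> L (y N)) (L - N) = 0"
proof -
  have "(adic_shift \<pi> ^^ N) (perc \<pi> L (y N)) (L - N) = perc \<pi> L (y N) L div \<pi> ^ N"
    using shift_iter L by simp
  also have "\<dots> = y N div \<pi> ^ N" using perc_low[of L L] yres[OF y] L by simp
  also have "\<dots> = 0" using res_div0 res_elem[OF y] by simp
  finally show ?thesis .
qed

lemma cp_step: assumes y: "y \<in> adic_elems \<pi>" and L: "N + 1 < L"
  shows "(adic_shift \<pi> ^^ (N+1)) (perc \<pi> L (y N)) (L - 1) = (adic_shift \<pi> ^^ (N+1)) (perc \<pi> L (y (Suc N))) (L - 1)"
proof -
  have L1: "1 \<le> L" using L by simp
  have pw: "\<pi> ^ L = \<pi> ^ (N + 1) * \<pi> ^ (L - N - 1)"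
  proof -
    have "L = (N + 1) + (L - N - 1)" using L by simp
    then show ?thesis by (metis power_add)
  qed
  have b: "y N mod \<pi> ^ L = y N" "y N mod \<pi> ^ (N+1) = y N"
    using yres[OF y, of N L] yres[OF y, of N "N+1"] L by auto
  have b': "y (Suc N) mod \<pi> ^ L = y (Suc N)" "y (Suc N) mod \<pi> ^ (N+1) = y (Suc N)"
    using yres[OF y, of "Suc N" L] yres[OF y, of "Suc N" "N+1"] L by auto
  have c: "y (Suc N) mod \<pi> ^ N = y N" using coh[OF y, of N "Suc N"] by simp
  have e1: "(adic_shift \<pi> ^^ (N+1)) (perc \<pi> L (y N)) (L - 1) = \<pi> ^ (L - N - 1) * y N"
  proof -
    have "(adic_shift \<pi> ^^ (N+1)) (perc \<pi> L (y N)) (L - 1) = perc \<pi> L (y N) (L - 1 + (N+1)) div \<pi> ^ (N+1)"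
      by (rule shift_iter)
    also have "L - 1 + (N+1) = N + L" using L by simp
    also have "perc \<pi> L (y N) (N + L) = y N + \<pi> ^ L * perc \<pi> L (y N) N" by (rule perc_period[OF b(1) L1])
    also have "perc \<pi> L (y N) N = y N" using cp_y[OF y] L by simp
    also have "(y N + \<pi> ^ L * y N) div \<pi> ^ (N+1) = (y N + \<pi> ^ (N+1) * (\<pi> ^ (L - N - 1) * y N)) div \<pi> ^ (N+1)"
      unfolding pw by (simp add: mult.assoc)
    also have "\<dots> = \<pi> ^ (L - N - 1) * y N" by (rule div_add_res[OF b(2)])
    finally show ?thesis .
  qed
  have e2: "(adic_shift \<pi> ^^ (N+1)) (perc \<pi> L (y (Suc N))) (L - 1) = \<pi> ^ (L - N - 1) * y N"
  proof -
    have "(adic_shift \<pi> ^^ (N+1)) (perc \<pi> L (y (Suc N))) (L - 1) = perc \<pi> L (y (Suc N)) (L - 1 + (N+1)) div \<pi> ^ (N+1)"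
      by (rule shift_iter)
    also have "L - 1 + (N+1) = N + L" using L by simp
    also have "perc \<pi> L (y (Suc N)) (N + L) = y (Suc N) + \<pi> ^ L * perc \<pi> L (y (Suc N)) N" by (rule perc_period[OF b'(1) L1])
    also have "perc \<pi> L (y (Suc N)) N = y N" using perc_low[of N L] c L by simp
    also have "(y (Suc N) + \<pi> ^ L * y N) div \<pi> ^ (N+1) = (y (Suc N) + \<pi> ^ (N+1) * (\<pi> ^ (L - N - 1) * y N)) div \<pi> ^ (N+1)"
      unfolding pw by (simp add: mult.assoc)
    also have "\<dots> = \<pi> ^ (L - N - 1) * y N" by (rule div_add_res[OF b'(2)])
    finally show ?thesis .
  qed
  show ?thesis using e1 e2 by simp
qed

lemma cp_shift: assumes y: "y \<in> adic_elems \<pi>" and N: "1 \<le> N" "N < L"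
  shows "adic_shift \<pi> (perc \<pi> L (y N)) (L - 1) = perc \<pi> L (adic_shift \<pi> y (N - 1)) (L - 1)"
proof -
  have Ty: "adic_shift \<pi> y \<in> adic_elems \<pi>" by (rule shift_elem[OF y])
  have "adic_shift \<pi> (perc \<pi> L (y N)) (L - 1) = perc \<pi> L (y N) L div \<pi>"
    using N by (simp add: adic_shift_def)
  also have "\<dots> = y N div \<pi>" using perc_low[of L L] yres[OF y] N by simp
  also have "\<dots> = adic_shift \<pi> y (N - 1)" using N by (simp add: adic_shift_def)
  also have "\<dots> = perc \<pi> L (adic_shift \<pi> y (N - 1)) (L - 1)"
    using perc_low[of "L - 1" L] yres[OF Ty, of "N - 1" "L - 1"] N by simp
  finally show ?thesis .
qed

lemma neg_cong: assumes L: "1 \<le> L"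
  shows "\<pi> ^ n dvd ((1 - \<pi> ^ L) * adic_neg \<pi> (perc \<pi> L b) n - (- b))"
proof -
  define p where "p = perc \<pi> L b n"
  define q where "q = - p div \<pi> ^ n"
  have a: "adic_neg \<pi> (perc \<pi> L b) n = - p - \<pi> ^ n * q"
    unfolding adic_neg_def p_def q_def by (simp add: minus_mult_div_eq_mod[symmetric])
  have eq: "(1 - \<pi> ^ L) * adic_neg \<pi> (perc \<pi> L b) n - (- b) = - ((1 - \<pi> ^ L) * p - b) - \<pi> ^ n * ((1 - \<pi> ^ L) * q)"
    unfolding a by (simp add: algebra_simps)
  have "\<pi> ^ n dvd ((1 - \<pi> ^ L) * p - b)" unfolding p_def by (rule perc_cong[OF L])
  then have d1: "\<pi> ^ n dvd - ((1 - \<pi> ^ L) * p - b)" by (simp only: dvd_minus_iff)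
  have d2: "\<pi> ^ n dvd \<pi> ^ n * ((1 - \<pi> ^ L) * q)" by simp
  show ?thesis unfolding eq by (rule dvd_diff[OF d1 d2])
qed

end

definition agO :: "nat set \<Rightarrow> nat set \<Rightarrow> nat \<Rightarrow> 'f obar \<Rightarrow> 'f obar \<Rightarrow> bool" where
  "agO I J n x y \<longleftrightarrow> (\<forall>t\<in>I. fst x t n = fst y t n) \<and> (\<forall>t\<in>J. snd x t n = snd y t n)"

definition perO :: "(nat \<Rightarrow> int) \<Rightarrow> (nat \<Rightarrow> 'f::field poly) \<Rightarrow> nat \<Rightarrow> nat \<Rightarrow> 'f obar \<Rightarrow> 'f obar" where
  "perO piZ piA L N y = ((\<lambda>t. perc (piZ t) L (fst y t N)), (\<lambda>t. perc (piA t) L (snd y t N)))"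

definition zO :: "'f::zero obar" where "zO = ((\<lambda>t n. 0), (\<lambda>t n. 0))"

lemma phi_fst: "fst ((obar_phi piZ piA ^^ k) x) t = (adic_shift (piZ t) ^^ k) (fst x t)"
  by (induction k) (simp_all add: obar_phi_def)
lemma phi_snd: "snd ((obar_phi piZ piA ^^ k) x) t = (adic_shift (piA t) ^^ k) (snd x t)"
  by (induction k) (simp_all add: obar_phi_def)
lemma phi1_fst: "fst (obar_phi piZ piA x) t = adic_shift (piZ t) (fst x t)"
  by (simp add: obar_phi_def)
lemma phi1_snd: "snd (obar_phi piZ piA x) t = adic_shift (piA t) (snd x t)"
  by (simp add: obar_phi_def)
lemma neg_fst: "fst (obar_neg piZ piA x) t = adic_neg (piZ t) (fst x t)"
  by (simp add: obar_neg_def)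
lemma neg_snd: "snd (obar_neg piZ piA x) t = adic_neg (piA t) (snd x t)"
  by (simp add: obar_neg_def)

lemma Obar_iff: "x \<in> Obar I J piZ piA \<longleftrightarrow>
   (\<forall>t\<in>I. fst x t \<in> adic_elems (piZ t)) \<and> (\<forall>t. t \<notin> I \<longrightarrow> fst x t = (\<lambda>_. 0)) \<and>
   (\<forall>t\<in>J. snd x t \<in> adic_elems (piA t)) \<and> (\<forall>t. t \<notin> J \<longrightarrow> snd x t = (\<lambda>_. 0))"
  by (cases x) (auto simp: Obar_def split: if_splits)

lemma obar_eqI: "(\<And>t. fst x t = fst y t) \<Longrightarrow> (\<And>t. snd x t = snd y t) \<Longrightarrow> x = y"
  by (simp add: prod_eq_iff fun_eq_iff)

context
  fixes I J :: "nat set" and piZ :: "nat \<Rightarrow> int" and piA :: "nat \<Rightarrow> 'f::{finite,field} poly"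
  assumes pZ: "\<forall>t\<in>I. piZ t > 1" and pA: "\<forall>t\<in>J. degree (piA t) > 0"
begin

lemma aZ: "t \<in> I \<Longrightarrow> adic (piZ t)" using pZ by (intro adic_int) auto
lemma aA: "t \<in> J \<Longrightarrow> adic (piA t)" using pA by (intro adic_poly) auto

abbreviation "XX \<equiv> Obar I J piZ piA"
abbreviation "TT \<equiv> obar_phi piZ piA"
abbreviation "NG \<equiv> obar_neg piZ piA"

lemma TX: "x \<in> XX \<Longrightarrow> TT x \<in> XX"
  unfolding Obar_iff phi1_fst phi1_snd
  by (auto simp: shift_zero intro: adic.shift_elem[OF aZ] adic.shift_elem[OF aA])

lemma NX: "x \<in> XX \<Longrightarrow> NG x \<in> XX"
  unfolding Obar_iff neg_fst neg_snd
  by (auto simp: neg_zero intro: adic.neg_elem[OF aZ] adic.neg_elem[OF aA])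

lemma NN: assumes x: "x \<in> XX" shows "NG (NG x) = x"
proof (rule obar_eqI)
  fix t
  show "fst (NG (NG x)) t = fst x t"
    using x by (cases "t \<in> I") (auto simp: neg_fst Obar_iff neg_zero adic.neg_neg[OF aZ])
  show "snd (NG (NG x)) t = snd x t"
    using x by (cases "t \<in> J") (auto simp: neg_snd Obar_iff neg_zero adic.neg_neg[OF aA])
qed

lemma zX: "zO \<in> XX" by (simp add: Obar_iff zO_def zero_elem)
lemma Tz: "TT zO = zO" by (rule obar_eqI) (simp_all add: zO_def phi1_fst phi1_snd shift_zero)
lemma Nz: "NG zO = zO" by (rule obar_eqI) (simp_all add: zO_def neg_fst neg_snd neg_zero)

lemma ag0: "x \<in> XX \<Longrightarrow> y \<in> XX \<Longrightarrow> agO I J 0 x y"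
  unfolding agO_def Obar_iff by (auto simp: adic.elem0[OF aZ] adic.elem0[OF aA])

lemma ag_mono: assumes x: "x \<in> XX" and y: "y \<in> XX" and a: "agO I J m x y" and nm: "n \<le> m"
  shows "agO I J n x y"
  unfolding agO_def
proof (intro conjI ballI)
  fix t assume t: "t \<in> I"
  have "fst x t n = fst x t m mod piZ t ^ n" using adic.coh[OF aZ[OF t], of "fst x t" n m] x t nm by (simp add: Obar_iff)
  also have "\<dots> = fst y t m mod piZ t ^ n" using a t by (simp add: agO_def)
  also have "\<dots> = fst y t n" using adic.coh[OF aZ[OF t], of "fst y t" n m] y t nm by (simp add: Obar_iff)
  finally show "fst x t n = fst y t n" .
next
  fix t assume t: "t \<in> J"
  have "snd x t n = snd x t m mod piA t ^ n" using adic.coh[OF aA[OF t], of "snd x t" n m] x t nm by (simp add: Obar_iff)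
  also have "\<dots> = snd y t m mod piA t ^ n" using a t by (simp add: agO_def)
  also have "\<dots> = snd y t n" using adic.coh[OF aA[OF t], of "snd y t" n m] y t nm by (simp add: Obar_iff)
  finally show "snd x t n = snd y t n" .
qed

lemma ag_T: "agO I J (n + k) x y \<Longrightarrow> agO I J n ((TT^^k) x) ((TT^^k) y)"
  unfolding agO_def phi_fst phi_snd
  by (simp add: adic.shift_iter[OF aZ] adic.shift_iter[OF aA])

lemma perX: "y \<in> XX \<Longrightarrow> 0 < L \<Longrightarrow> perO piZ piA L N y \<in> XX"
  unfolding Obar_iff perO_def
  by (auto simp: perc_zero intro: adic.perc_elem[OF aZ] adic.perc_elem[OF aA])

lemma per_period: assumes y: "y \<in> XX" and L: "N < L"
  shows "(TT^^L) (perO piZ piA L N y) = perO piZ piA L N y"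
proof (rule obar_eqI)
  fix t
  show "fst ((TT^^L) (perO piZ piA L N y)) t = fst (perO piZ piA L N y) t"
    using y L by (cases "t \<in> I") (auto simp: phi_fst perO_def Obar_iff perc_zero shift_iter_zero adic.cp_period[OF aZ])
  show "snd ((TT^^L) (perO piZ piA L N y)) t = snd (perO piZ piA L N y) t"
    using y L by (cases "t \<in> J") (auto simp: phi_snd perO_def Obar_iff perc_zero shift_iter_zero adic.cp_period[OF aA])
qed

lemma per_L: "y \<in> XX \<Longrightarrow> N \<le> L \<Longrightarrow> N \<le> L' \<Longrightarrow> n \<le> L \<Longrightarrow> n \<le> L'
      \<Longrightarrow> agO I J n (perO piZ piA L N y) (perO piZ piA L' N y)"
  unfolding agO_def perO_def by (auto simp: adic.perc_low[OF aA] adic.perc_low[OF aZ])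


lemma per_z: assumes y: "y \<in> XX" and L: "N < L"
  shows "agO I J (L - N) ((TT^^N) (perO piZ piA L N y)) zO"
  unfolding agO_def perO_def phi_fst phi_snd zO_def
  using y L by (auto simp: Obar_iff intro: adic.cp_z[OF aZ] adic.cp_z[OF aA])

lemma per_step: assumes y: "y \<in> XX" and L: "N + 1 < L"
  shows "agO I J (L - 1) ((TT^^(N+1)) (perO piZ piA L N y)) ((TT^^(N+1)) (perO piZ piA L (N+1) y))"
  unfolding agO_def phi_fst phi_snd
proof (intro conjI ballI)
  fix t assume t: "t \<in> I"
  then show "(adic_shift (piZ t) ^^ (N + 1)) (fst (perO piZ piA L N y) t) (L - 1) =
        (adic_shift (piZ t) ^^ (N + 1)) (fst (perO piZ piA L (N + 1) y) t) (L - 1)"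
    using adic.cp_step[OF aZ[OF t], of "fst y t" N L] y L by (simp add: Obar_iff perO_def)
next
  fix t assume t: "t \<in> J"
  then show "(adic_shift (piA t) ^^ (N + 1)) (snd (perO piZ piA L N y) t) (L - 1) =
        (adic_shift (piA t) ^^ (N + 1)) (snd (perO piZ piA L (N + 1) y) t) (L - 1)"
    using adic.cp_step[OF aA[OF t], of "snd y t" N L] y L by (simp add: Obar_iff perO_def)
qed

lemma per_shift: assumes y: "y \<in> XX" and N: "1 \<le> N" "N < L"
  shows "agO I J (L - 1) (TT (perO piZ piA L N y)) (perO piZ piA L (N - 1) (TT y))"
  unfolding agO_def phi1_fst phi1_snd
proof (intro conjI ballI)
  fix t assume t: "t \<in> I"
  then show "adic_shift (piZ t) (fst (perO piZ piA L N y) t) (L - 1) = fst (perO piZ piA L (N - 1) (TT y)) t (L - 1)"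
    using adic.cp_shift[OF aZ[OF t], of "fst y t" N L] y N by (simp add: Obar_iff perO_def phi1_fst)
next
  fix t assume t: "t \<in> J"
  then show "adic_shift (piA t) (snd (perO piZ piA L N y) t) (L - 1) = snd (perO piZ piA L (N - 1) (TT y)) t (L - 1)"
    using adic.cp_shift[OF aA[OF t], of "snd y t" N L] y N by (simp add: Obar_iff perO_def phi1_snd)
qed

lemma per_y: assumes y: "y \<in> XX" and N: "N < L"
  shows "agO I J N (perO piZ piA L N y) y"
  unfolding agO_def perO_def
  using y N by (auto simp: Obar_iff intro: adic.cp_y[OF aZ] adic.cp_y[OF aA])

lemma per_loc: assumes x: "x \<in> XX" and y: "y \<in> XX" and a: "agO I J N x y"
  shows "perO piZ piA L N x = perO piZ piA L N y"
proof (rule obar_eqI)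
  fix t
  show "fst (perO piZ piA L N x) t = fst (perO piZ piA L N y) t"
    using x y a by (cases "t \<in> I") (auto simp: perO_def agO_def Obar_iff)
  show "snd (perO piZ piA L N x) t = snd (perO piZ piA L N y) t"
    using x y a by (cases "t \<in> J") (auto simp: perO_def agO_def Obar_iff)
qed

lemma smallZ: assumes t: "t \<in> I" and y: "y \<in> adic_elems (piZ t)" and N: "N < L"
  shows "small_Z (piZ t) (adic_neg (piZ t) (perc (piZ t) L (y N)))"
proof -
  define p where "p = piZ t"
  have p: "p > 1" using pZ t unfolding p_def by auto
  define b where "b = y N"
  have bmod: "b mod p ^ N = b" unfolding b_def p_def using adic.res_elem[OF aZ[OF t] y] .
  have b0: "0 \<le> b" "b < p ^ N" using p bmod pos_mod_sign[of "p ^ N" b] pos_mod_bound[of "p ^ N" b] by auto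
  have "p ^ L \<ge> p ^ (N + 1)" using p N by (intro power_increasing) auto
  moreover have "p ^ (N + 1) = p * p ^ N" by simp
  moreover have "p * p ^ N \<ge> 2 * p ^ N" using p by (intro mult_right_mono) auto
  moreover have "p ^ N \<ge> 1" using p by simp
  ultimately have bl: "b < p ^ L - 1" using b0 by linarith
  have den: "1 - p ^ L \<noteq> 0" using bl b0 by linarith
  show ?thesis unfolding small_Z_def
  proof (intro exI conjI allI)
    show "1 - p ^ L \<noteq> 0" using den .
    fix n
    show "piZ t ^ n dvd ((1 - p ^ L) * adic_neg (piZ t) (perc (piZ t) L (y N)) n - - b)"
      using adic.neg_cong[OF aZ[OF t], of L n "y N"] N unfolding p_def b_def by simp
  next
    have e: "real_of_int (- b) / real_of_int (1 - p ^ L) = real_of_int b / real_of_int (p ^ L - 1)"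
      by (metis minus_divide_divide of_int_minus minus_diff_eq)
    have D: "real_of_int (p ^ L - 1) > real_of_int b" "real_of_int b \<ge> 0" using bl b0 by linarith+
    have "rat_abs (- b) (1 - p ^ L) = real_of_int b / real_of_int (p ^ L - 1)"
      unfolding rat_abs_def e using D by simp
    also have "\<dots> < 1" using D by simp
    finally show "rat_abs (- b) (1 - p ^ L) < 1" .
  qed
qed

lemma card_ge2: "card (UNIV :: 'f set) \<ge> 2"
proof -
  have "card {0 :: 'f, 1} = 2" by simp
  moreover have "card {0 :: 'f, 1} \<le> card (UNIV :: 'f set)" by (rule card_mono) auto
  ultimately show ?thesis by simp
qed

lemma smallA: assumes t: "t \<in> J" and y: "y \<in> adic_elems (piA t)" and N: "N < L"
  shows "small_A (piA t) (adic_neg (piA t) (perc (piA t) L (y N)))"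
proof -
  define p where "p = piA t"
  have p: "degree p > 0" "p \<noteq> 0" using pA t unfolding p_def by auto
  define b where "b = y N"
  have bmod: "b mod p ^ N = b" unfolding b_def p_def using adic.res_elem[OF aA[OF t] y] .
  have dL: "degree (p ^ L) = L * degree p" using p by (simp add: degree_power_eq)
  have dden: "degree (1 - p ^ L) = L * degree p"
  proof -
    have "degree (p ^ L + (- 1)) = degree (p ^ L)" by (rule degree_add_eq_left) (use dL p N in simp)
    moreover have "1 - p ^ L = - (p ^ L + (- 1))" by simp
    ultimately show ?thesis using dL by (simp only: degree_minus)
  qed
  have den: "1 - p ^ L \<noteq> 0" using dden p N by (metis degree_0 less_nat_zero_code mult_is_0 not_gr0)
  show ?thesis unfolding small_A_def
  proof (intro exI conjI allI)
    show "1 - p ^ L \<noteq> 0" using den .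
    fix n
    show "piA t ^ n dvd ((1 - p ^ L) * adic_neg (piA t) (perc (piA t) L (y N)) n - - b)"
      using adic.neg_cong[OF aA[OF t], of L n "y N"] N unfolding p_def b_def by simp
  next
    show "kinf_abs (- b) (1 - p ^ L) < 1"
    proof (cases "b = 0")
      case True then show ?thesis by (simp add: kinf_abs_def)
    next
      case False
      have "degree b < degree (p ^ N)" using degree_mod_less'[of "p ^ N" b] bmod False p by simp
      then have "degree b < N * degree p" using p by (simp add: degree_power_eq)
      moreover have "N * degree p < L * degree p" using N p by simp
      ultimately have h: "real (degree b) < real (L * degree p)" by linarith
      have "real (degree (- b)) - real (degree (1 - p ^ L)) < 0" using h dden by simp
      moreover have "real (card (UNIV :: 'f set)) > 1" using card_ge2 by simp
      ultimately show ?thesis using False by (simp add: kinf_abs_def powr_less_one)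
    qed
  qed
qed

lemma per_small: assumes y: "y \<in> XX" and N: "N < L"
  shows "(\<forall>t\<in>I. small_Z (piZ t) (fst (NG (perO piZ piA L N y)) t))
       \<and> (\<forall>t\<in>J. small_A (piA t) (snd (NG (perO piZ piA L N y)) t))"
  using y N by (auto simp: neg_fst neg_snd perO_def Obar_iff intro: smallZ smallA)


lemma trunc_elem: assumes t: "adic \<pi>" and y: "y \<in> adic_elems \<pi>"
  shows "(\<lambda>n. y k mod \<pi> ^ min n k) \<in> adic_elems \<pi>"
proof -
  interpret adic \<pi> by (rule t)
  have v: "y k mod \<pi> ^ min n k mod \<pi> ^ n = y k mod \<pi> ^ min n k" for n
  proof (cases "n \<le> k")
    case True then show ?thesis by simp
  next
    case False
    then have "y k mod \<pi> ^ min n k = y k" using res_elem[OF y] by simp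
    moreover have "y k mod \<pi> ^ n = y k" using res_lift[OF res_elem[OF y]] False by simp
    ultimately show ?thesis by simp
  qed
  have w: "y k mod \<pi> ^ min (Suc n) k mod \<pi> ^ n = y k mod \<pi> ^ min n k" for n
  proof (cases "Suc n \<le> k")
    case True then show ?thesis using mod_mod_le[of n "Suc n"] by simp
  next
    case False
    then have "min (Suc n) k = min n k" by simp
    then show ?thesis using v[of n] by simp
  qed
  show ?thesis unfolding adic_elems_def using v w by simp
qed

lemma reps: assumes fI: "finite I" and fJ: "finite J"
  shows "\<exists>R. finite R \<and> R \<subseteq> XX \<and> (\<forall>x\<in>XX. \<exists>r\<in>R. agO I J k x r)"
proof -
  define H where "H = (\<lambda>(a :: nat \<Rightarrow> int, b :: nat \<Rightarrow> 'f poly).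
      ((\<lambda>t n. a t mod piZ t ^ min n k), (\<lambda>t n. b t mod piA t ^ min n k)))"
  define tr where "tr x = H (\<lambda>t. fst x t k, \<lambda>t. snd x t k)" for x :: "'f obar"
  define S1 where "S1 = {a. \<forall>t. (t \<in> I \<longrightarrow> a t mod piZ t ^ k = a t) \<and> (t \<notin> I \<longrightarrow> a t = (0::int))}"
  define S2 where "S2 = {a. \<forall>t. (t \<in> J \<longrightarrow> a t mod piA t ^ k = a t) \<and> (t \<notin> J \<longrightarrow> a t = (0::'f poly))}"
  have fS1: "finite S1"
  proof -
    have "S1 \<subseteq> (\<lambda>h t. if t \<in> I then h t else 0) ` (PiE I (\<lambda>t. {r. r mod piZ t ^ k = r}))"
    proof
      fix a assume a: "a \<in> S1"
      have "a = (\<lambda>t. if t \<in> I then restrict a I t else 0)" using a unfolding S1_def by (auto simp: fun_eq_iff)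
      moreover have "restrict a I \<in> PiE I (\<lambda>t. {r. r mod piZ t ^ k = r})" using a unfolding S1_def by auto
      ultimately show "a \<in> (\<lambda>h t. if t \<in> I then h t else 0) ` (PiE I (\<lambda>t. {r. r mod piZ t ^ k = r}))" by blast
    qed
    moreover have "finite {r. r mod piZ t ^ k = r}" if "t \<in> I" for t
      using fin_res_int[of "piZ t" k] pZ that by force
    then have "finite (PiE I (\<lambda>t. {r. r mod piZ t ^ k = r}))"
      using fI by (intro finite_PiE) auto
    ultimately show ?thesis by (meson finite_imageI finite_subset)
  qed
  have fS2: "finite S2"
  proof -
    have "S2 \<subseteq> (\<lambda>h t. if t \<in> J then h t else 0) ` (PiE J (\<lambda>t. {r. r mod piA t ^ k = r}))"
    proof
      fix a assume a: "a \<in> S2"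
      have "a = (\<lambda>t. if t \<in> J then restrict a J t else 0)" using a unfolding S2_def by (auto simp: fun_eq_iff)
      moreover have "restrict a J \<in> PiE J (\<lambda>t. {r. r mod piA t ^ k = r})" using a unfolding S2_def by auto
      ultimately show "a \<in> (\<lambda>h t. if t \<in> J then h t else 0) ` (PiE J (\<lambda>t. {r. r mod piA t ^ k = r}))" by blast
    qed
    moreover have "finite {r. r mod piA t ^ k = r}" if "t \<in> J" for t
      using fin_res_poly[of "piA t" k] pA that by force
    then have "finite (PiE J (\<lambda>t. {r. r mod piA t ^ k = r}))"
      using fJ by (intro finite_PiE) auto
    ultimately show ?thesis by (meson finite_imageI finite_subset)
  qed
  have trX: "tr x \<in> XX" if x: "x \<in> XX" for x
    unfolding Obar_iff tr_def H_def
    using x by (auto simp: Obar_iff intro: trunc_elem[OF aZ] trunc_elem[OF aA])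
  have trag: "agO I J k x (tr x)" if x: "x \<in> XX" for x
    unfolding agO_def tr_def H_def
    using x by (auto simp: Obar_iff adic.res_elem[OF aZ] adic.res_elem[OF aA])
  have sub: "tr ` XX \<subseteq> H ` (S1 \<times> S2)"
  proof
    fix z assume "z \<in> tr ` XX"
    then obtain x where x: "x \<in> XX" "z = tr x" by blast
    have "(\<lambda>t. fst x t k, \<lambda>t. snd x t k) \<in> S1 \<times> S2"
      using x(1) unfolding S1_def S2_def by (auto simp: Obar_iff adic.res_elem[OF aZ] adic.res_elem[OF aA])
    then show "z \<in> H ` (S1 \<times> S2)" using x(2) unfolding tr_def by blast
  qed
  have "finite (tr ` XX)" using sub fS1 fS2 by (meson finite_SigmaI finite_imageI finite_subset)
  moreover have "tr ` XX \<subseteq> XX" using trX by blast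
  moreover have "\<forall>x\<in>XX. \<exists>r\<in>tr ` XX. agO I J k x r" using trag by blast
  ultimately show ?thesis by blast
qed

lemma limit: assumes s: "\<And>k. s k \<in> XX \<and> agO I J k (s (Suc k)) (s k)"
  shows "\<exists>x\<in>XX. \<forall>k. agO I J k x (s k)"
proof -
  define x where "x = ((\<lambda>t n. fst (s n) t n), (\<lambda>t n. snd (s n) t n))"
  have A: "agO I J k x (s k)" for k unfolding x_def agO_def by simp
  have "x \<in> XX" unfolding Obar_iff
  proof (intro conjI ballI allI impI)
    fix t assume t: "t \<in> I"
    have fx: "fst x t = (\<lambda>n. fst (s n) t n)" by (simp add: x_def)
    show "fst x t \<in> adic_elems (piZ t)" unfolding adic_elems_def fx
    proof (intro CollectI allI conjI)
      fix n
      show "fst (s n) t n mod piZ t ^ n = fst (s n) t n"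
        using s[of n] t by (auto simp: Obar_iff adic_elems_def)
      have "fst (s (Suc n)) t (Suc n) mod piZ t ^ n = fst (s (Suc n)) t n"
        using s[of "Suc n"] t by (auto simp: Obar_iff adic_elems_def)
      also have "\<dots> = fst (s n) t n" using s[of n] t by (auto simp: agO_def)
      finally show "(\<lambda>n. fst (s n) t n) (Suc n) mod piZ t ^ n = (\<lambda>n. fst (s n) t n) n" by simp
    qed
  next
    fix t assume t: "t \<notin> I"
    show "fst x t = (\<lambda>_. 0)" unfolding x_def using s t by (auto simp: Obar_iff fun_eq_iff)
  next
    fix t assume t: "t \<in> J"
    have fx: "snd x t = (\<lambda>n. snd (s n) t n)" by (simp add: x_def)
    show "snd x t \<in> adic_elems (piA t)" unfolding adic_elems_def fx
    proof (intro CollectI allI conjI)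
      fix n
      show "snd (s n) t n mod piA t ^ n = snd (s n) t n"
        using s[of n] t by (auto simp: Obar_iff adic_elems_def)
      have "snd (s (Suc n)) t (Suc n) mod piA t ^ n = snd (s (Suc n)) t n"
        using s[of "Suc n"] t by (auto simp: Obar_iff adic_elems_def)
      also have "\<dots> = snd (s n) t n" using s[of n] t by (auto simp: agO_def)
      finally show "(\<lambda>n. snd (s n) t n) (Suc n) mod piA t ^ n = (\<lambda>n. snd (s n) t n) n" by simp
    qed
  next
    fix t assume t: "t \<notin> J"
    show "snd x t = (\<lambda>_. 0)" unfolding x_def using s t by (auto simp: Obar_iff fun_eq_iff)
  qed
  then show ?thesis using A by blast
qed

end

theorem mainTheorem3:
  fixes I J :: "nat set"
    and piZ :: "nat \<Rightarrow> int"
    and piA :: "nat \<Rightarrow> 'f::{finite,field} poly"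
    and abv :: "'k::field \<Rightarrow> real"
    and F :: "'f obar \<Rightarrow> 'k"
  assumes "finite I" and "finite J"
    and piZ: "\<forall>t\<in>I. \<exists>p::nat. \<exists>e::nat. prime p \<and> e > 0 \<and> piZ t = int p ^ e"
    and piA: "\<forall>t\<in>J. \<exists>v e. lead_coeff v = 1 \<and> irreducible v \<and> e > 0 \<and> piA t = v ^ e"
    and K: "complete_nonarch_field abv"
    and Fcont: "obar_continuous I J piZ piA abv F"
    and Fnz: "\<forall>x\<in>Obar I J piZ piA. F x \<noteq> 0"
    and per: "\<forall>(n::nat) x. x \<in> Obar I J piZ piA
                 \<and> (\<forall>t\<in>I. small_Z (piZ t) (fst x t))
                 \<and> (\<forall>t\<in>J. small_A (piA t) (snd x t))
                 \<and> (obar_phi piZ piA ^^ n) (obar_neg piZ piA x) = obar_neg piZ piA x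
               \<longrightarrow> (\<Prod>j<n. F (obar_neg piZ piA ((obar_phi piZ piA ^^ j) (obar_neg piZ piA x)))) = 1"
  shows "\<exists>G :: 'f obar \<Rightarrow> 'k.
           obar_continuous I J piZ piA abv G
         \<and> (\<forall>x\<in>Obar I J piZ piA. G x \<noteq> 0)
         \<and> (\<forall>x\<in>Obar I J piZ piA.
              F x = G x / G (obar_neg piZ piA (obar_phi piZ piA (obar_neg piZ piA x))))"
proof -
  note fI = \<open>finite I\<close> and fJ = \<open>finite J\<close>
  have hZ: "\<forall>t\<in>I. piZ t > 1"
  proof
    fix t assume t: "t \<in> I"
    then obtain p e where pe: "prime (p::nat)" "e > (0::nat)" "piZ t = int p ^ e" using piZ by blast
    have "p \<ge> 2" using prime_ge_2_nat[OF pe(1)] .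
    then have p2: "(2::int) \<le> int p" by simp
    then have h: "int p ^ 1 \<le> int p ^ e" using pe(2) by (intro power_increasing) auto
    then have "int p \<le> int p ^ e" by (simp only: power_one_right)
    then show "piZ t > 1" using pe(3) p2 by linarith
  qed
  have hA: "\<forall>t\<in>J. degree (piA t) > 0"
  proof
    fix t assume t: "t \<in> J"
    then obtain v e where ve: "irreducible v" "e > (0::nat)" "piA t = v ^ e" using piA by blast
    have v0: "v \<noteq> 0" using ve(1) by auto
    have "\<not> is_unit v" using irreducible_not_unit[OF ve(1)] .
    then have "degree v > 0" using is_unit_iff_degree[OF v0] by simp
    then show "degree (piA t) > 0" using ve(2,3) v0 by (simp add: degree_power_eq)
  qed
  have nonarch: "nonarch_abs abv" and compl: "abv_complete abv" using K by (auto simp: complete_nonarch_field_def)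
  define X where "X = Obar I J piZ piA"
  define T where "T = obar_phi piZ piA"
  define NG where "NG = obar_neg piZ piA"
  define f where "f y = F (NG y)" for y
  note TX = TX[OF hZ hA] and NX = NX[OF hZ hA] and NN = NN[OF hZ hA]
  note perX = perX[OF hZ hA] and per_small = per_small[OF hZ hA] and per_period = per_period[OF hZ hA]
  have agNG: "agO I J N (NG y) (NG x)" if "agO I J N y x" for N x y
    using that unfolding agO_def NG_def by (simp add: neg_fst neg_snd adic_neg_def)
  have orbit: "(\<Prod>j<L. f ((T^^j) (perO piZ piA L N y))) = 1" if y: "y \<in> X" and NL: "N < L" for y L N
  proof -
    define p where "p = perO piZ piA L N y"
    have pX: "p \<in> X" unfolding p_def X_def using perX y NL unfolding X_def by simp
    have xX: "NG p \<in> X" using NX pX unfolding X_def NG_def by simp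
    have nn: "NG (NG p) = p" using NN pX unfolding X_def NG_def by simp
    have sm: "(\<forall>t\<in>I. small_Z (piZ t) (fst (NG p) t)) \<and> (\<forall>t\<in>J. small_A (piA t) (snd (NG p) t))"
      using per_small y NL unfolding p_def X_def NG_def by simp
    have pp: "(T^^L) p = p" using per_period y NL unfolding p_def X_def T_def by simp
    have "(\<Prod>j<L. F (NG ((T^^j) (NG (NG p))))) = 1"
      using per[rule_format, of "NG p" L] xX sm pp nn unfolding X_def T_def NG_def by simp
    then show ?thesis unfolding f_def p_def[symmetric] nn by simp
  qed
  have small0Z: "small_Z \<pi> (\<lambda>_. 0)" for \<pi>
    unfolding small_Z_def by (intro exI[of _ 0] exI[of _ 1]) (simp add: rat_abs_def)
  have small0A: "small_A \<pi> (\<lambda>_. 0)" for \<pi>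
    unfolding small_A_def by (intro exI[of _ 0] exI[of _ 1]) (simp add: kinf_abs_def)
  have fz: "f zO = 1"
  proof -
    have nz: "NG zO = zO" using Nz[OF hZ hA] unfolding NG_def .
    have tz: "T zO = zO" using Tz[OF hZ hA] unfolding T_def .
    have smZ: "\<forall>t\<in>I. small_Z (piZ t) (fst zO t)" by (simp add: zO_def small0Z)
    have smA: "\<forall>t\<in>J. small_A (piA t) (snd zO t)" by (simp add: zO_def small0A)
    have "(T^^1) (NG zO) = NG zO" using nz tz by simp
    then have "(\<Prod>j<1. F (NG ((T^^j) (NG zO)))) = 1"
      using per[rule_format, of zO 1] zX[OF hZ hA] smZ smA unfolding NG_def T_def by blast
    then show ?thesis unfolding f_def using nz by simp
  qed
  have LV: "livsic abv X T (agO I J) (perO piZ piA) zO f"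
  proof (unfold_locales)
    show "nonarch_abs abv" by (rule nonarch)
    show "\<And>x. x \<in> X \<Longrightarrow> T x \<in> X" unfolding X_def T_def by (rule TX)
    show "\<And>y L N. y \<in> X \<Longrightarrow> 0 < L \<Longrightarrow> perO piZ piA L N y \<in> X" unfolding X_def by (rule perX)
    show "zO \<in> X" unfolding X_def by (rule zX[OF hZ hA])
    show "f zO = 1" by (rule fz)
    show "\<And>n x y. agO I J n x y \<Longrightarrow> agO I J n y x" by (auto simp: agO_def)
    show "\<And>n x y z. agO I J n x y \<Longrightarrow> agO I J n y z \<Longrightarrow> agO I J n x z" by (auto simp: agO_def)
    show "\<And>x y. x \<in> X \<Longrightarrow> y \<in> X \<Longrightarrow> agO I J 0 x y" unfolding X_def by (rule ag0[OF hZ hA])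
    show "\<And>x y m n. x \<in> X \<Longrightarrow> y \<in> X \<Longrightarrow> agO I J m x y \<Longrightarrow> n \<le> m \<Longrightarrow> agO I J n x y"
      unfolding X_def by (rule ag_mono[OF hZ hA])
    show "\<And>x y n k. x \<in> X \<Longrightarrow> y \<in> X \<Longrightarrow> agO I J (n + k) x y \<Longrightarrow> agO I J n ((T^^k) x) ((T^^k) y)"
      unfolding T_def by (rule ag_T[OF hZ hA])
    show "\<And>y N L. y \<in> X \<Longrightarrow> N < L \<Longrightarrow> (\<Prod>j<L. f ((T^^j) (perO piZ piA L N y))) = 1"
      by (rule orbit)
    show "\<And>y L L' N n. y \<in> X \<Longrightarrow> 0 < L \<Longrightarrow> 0 < L' \<Longrightarrow> N \<le> L \<Longrightarrow> N \<le> L' \<Longrightarrow> n \<le> L \<Longrightarrow> n \<le> L'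
      \<Longrightarrow> agO I J n (perO piZ piA L N y) (perO piZ piA L' N y)"
      unfolding X_def using per_L[OF hZ hA] by blast
    show "\<And>y N L. y \<in> X \<Longrightarrow> N < L \<Longrightarrow> agO I J (L - N) ((T^^N) (perO piZ piA L N y)) zO"
      unfolding X_def T_def by (rule per_z[OF hZ hA])
    show "\<And>y N L. y \<in> X \<Longrightarrow> N + 1 < L
      \<Longrightarrow> agO I J (L - 1) ((T^^(N+1)) (perO piZ piA L N y)) ((T^^(N+1)) (perO piZ piA L (N+1) y))"
      unfolding X_def T_def by (rule per_step[OF hZ hA])
    show "\<And>y N L. y \<in> X \<Longrightarrow> 1 \<le> N \<Longrightarrow> N < L \<Longrightarrow> agO I J (L - 1) (T (perO piZ piA L N y)) (perO piZ piA L (N - 1) (T y))"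
      unfolding X_def T_def by (rule per_shift[OF hZ hA])
    show "\<And>y N L. y \<in> X \<Longrightarrow> N < L \<Longrightarrow> agO I J N (perO piZ piA L N y) y"
      unfolding X_def by (rule per_y[OF hZ hA])
    show "\<And>x y N L. x \<in> X \<Longrightarrow> y \<in> X \<Longrightarrow> agO I J N x y \<Longrightarrow> perO piZ piA L N x = perO piZ piA L N y"
      unfolding X_def by (rule per_loc[OF hZ hA])
    show "\<And>k. \<exists>R. finite R \<and> R \<subseteq> X \<and> (\<forall>x\<in>X. \<exists>r\<in>R. agO I J k x r)"
      unfolding X_def by (rule reps[OF hZ hA fI fJ])
    show "\<And>s. (\<And>k. s k \<in> X \<and> agO I J k (s (Suc k)) (s k)) \<Longrightarrow> \<exists>x\<in>X. \<forall>k. agO I J k x (s k)"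
      unfolding X_def by (rule limit[OF hZ hA])
    show "\<And>x \<epsilon>. x \<in> X \<Longrightarrow> 0 < \<epsilon> \<Longrightarrow> \<exists>N. \<forall>y\<in>X. agO I J N y x \<longrightarrow> abv (f y - f x) < \<epsilon>"
    proof -
      fix x and \<epsilon> :: real assume x: "x \<in> X" and e: "0 < \<epsilon>"
      have nx: "NG x \<in> X" using NX x unfolding X_def NG_def by simp
      obtain N where N: "\<forall>y\<in>X. ((\<forall>t\<in>I. fst y t N = fst (NG x) t N) \<and> (\<forall>t\<in>J. snd y t N = snd (NG x) t N))
          \<longrightarrow> abv (F y - F (NG x)) < \<epsilon>"
        using Fcont nx e unfolding obar_continuous_def X_def by blast
      show "\<exists>N. \<forall>y\<in>X. agO I J N y x \<longrightarrow> abv (f y - f x) < \<epsilon>"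
      proof (intro exI ballI impI)
        fix y assume y: "y \<in> X" and a: "agO I J N y x"
        have "NG y \<in> X" using NX y unfolding X_def NG_def by simp
        moreover have "agO I J N (NG y) (NG x)" using agNG[OF a] .
        ultimately show "abv (f y - f x) < \<epsilon>" using N unfolding f_def agO_def by blast
      qed
    qed
    show "\<And>x. x \<in> X \<Longrightarrow> f x \<noteq> 0"
      using Fnz NX unfolding f_def X_def NG_def by blast
    show "abv_complete abv" by (rule compl)
  qed
  obtain Gl where G: "\<forall>x\<in>X. \<forall>e>0. \<exists>N. \<forall>y\<in>X. agO I J N y x \<longrightarrow> abv (Gl y - Gl x) < e"
    "\<forall>x\<in>X. Gl x \<noteq> 0" "\<forall>y\<in>X. Gl y = f y * Gl (T y)"
    using livsic.livsic_main[OF LV] by blast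
  define G where "G x = Gl (NG x)" for x
  have c: "obar_continuous I J piZ piA abv G"
    unfolding obar_continuous_def
  proof (intro ballI allI impI)
    fix x and \<epsilon> :: real assume x: "x \<in> Obar I J piZ piA" and e: "0 < \<epsilon>"
    have nx: "NG x \<in> X" using NX x unfolding X_def NG_def by simp
    obtain N where N: "\<forall>y\<in>X. agO I J N y (NG x) \<longrightarrow> abv (Gl y - Gl (NG x)) < \<epsilon>"
      using G(1) nx e by blast
    show "\<exists>N. \<forall>y\<in>Obar I J piZ piA. (\<forall>t\<in>I. fst y t N = fst x t N) \<and> (\<forall>t\<in>J. snd y t N = snd x t N)
        \<longrightarrow> abv (G y - G x) < \<epsilon>"
    proof (intro exI ballI impI)
      fix y assume y: "y \<in> Obar I J piZ piA" and a: "(\<forall>t\<in>I. fst y t N = fst x t N) \<and> (\<forall>t\<in>J. snd y t N = snd x t N)"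
      have "NG y \<in> X" using NX y unfolding X_def NG_def by simp
      moreover have "agO I J N (NG y) (NG x)" using agNG a unfolding agO_def by blast
      ultimately show "abv (G y - G x) < \<epsilon>" using N unfolding G_def by blast
    qed
  qed
  have nz: "\<forall>x\<in>Obar I J piZ piA. G x \<noteq> 0"
    using G(2) NX unfolding G_def X_def NG_def by blast
  have eq: "\<forall>x\<in>Obar I J piZ piA. F x = G x / G (obar_neg piZ piA (obar_phi piZ piA (obar_neg piZ piA x)))"
  proof
    fix x assume x: "x \<in> Obar I J piZ piA"
    have nx: "NG x \<in> X" using NX x unfolding X_def NG_def by simp
    have tx: "T (NG x) \<in> X" using TX nx unfolding X_def T_def by simp
    have g1: "G x = F x * Gl (T (NG x))"
      using G(3) nx NN x unfolding G_def f_def X_def NG_def by simp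
    have g2: "G (NG (T (NG x))) = Gl (T (NG x))"
      using NN tx unfolding G_def X_def NG_def by simp
    have "Gl (T (NG x)) \<noteq> 0" using G(2) tx by blast
    then show "F x = G x / G (obar_neg piZ piA (obar_phi piZ piA (obar_neg piZ piA x)))"
      using g1 g2 unfolding NG_def T_def by simp
  qed
  show ?thesis using c nz eq by blast
qed

end
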